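(* Let $n=p+q$, let $h^1,\dots,h^n:\mathbb{R}^{p,q}\to\mathcal{C}\ell_{\circledS}(p,q)$ be a Clifford field vector and $C_1,\dots,C_n:\mathbb{R}^{p,q}\to\mathcal{C}\ell_{\circledS}(p,q)$ be functions (all with continuous partial derivatives up to second order) such that $$\partial_\mu h^\nu-[C_\mu,h^\nu]=0\quad\text{for all }\mu,\nu=1,\dots,n.$$ Then $$\partial_\mu C_\nu-\partial_\nu C_\mu-[C_\mu,C_\nu]=0\quad\text{for all }\mu,\nu=1,\dots,n.$$ Moreover, these conditions are gauge invariant: if $C_\mu$ satisfy them and $S:\mathbb{R}^{p,q}\to\mathcal{C}\ell(p,q)$ is a smooth function with invertible values such that $S^{-1}\partial_\mu S\in\mathcal{C}\ell_{\circledS}(p,q)$ for all $\mu$, then $\acute C_\mu=S^{-1}C_\mu S-S^{-1}\partial_\mu S$ also satisfy $\partial_\mu \acute C_\nu-\partial_\nu \acute C_\mu-[\acute C_\mu,\acute C_\nu]=0$ for all $\mu,\nu$.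
   Context: $\mathbb{R}^{p,q}$ is $\mathbb{R}^n$ with Cartesian coordinates $x^\mu$, $\partial_\mu=\partial/\partial x^\mu$, metric $\eta=\mathrm{diag}(1,\dots,1,-1,\dots,-1)$ ($p$ ones, $q$ minus ones). $\mathcal{C}\ell(p,q)$ is the complex Clifford algebra with identity $e$ and generators $e^1,\dots,e^n$, $e^ae^b+e^be^a=2\eta^{ab}e$, with basis $e$, $e^{a_1\dots a_k}=e^{a_1}\cdots e^{a_k}$ ($a_1<\dots<a_k$); functions into it are differentiated coefficientwise. $[U,V]=UV-VU$. $\pi_k$ is the projection onto the span of the basis elements with $k$ indices, $\mathrm{Tr}(U)$ the coefficient of $e$. The center is $\mathcal{C}\ell_0$ for even $n$ and $\mathcal{C}\ell_0\oplus\mathcal{C}\ell_n$ for odd $n$; $\mathcal{C}\ell_{\circledS}(p,q)$ is the set of elements with zero projection onto the center. A Clifford field vector is a collection $h^\mu:\mathbb{R}^{p,q}\to\mathcal{C}\ell(p,q)$, $\mu=1,\dots,n$, with $h^\mu h^\nu+h^\nu h^\mu=2\eta^{\mu\nu}e$ and $\mathrm{Tr}(h^1\cdots h^n)=0$ at every point. *)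

theory Defs
  imports "HOL-Analysis.Analysis"
begin

text \<open>Generator indices are 0..n-1
 (the paper's 1..n shifted by one); generators 0..p-1 square to +1, p..n-1 to -1.
 An element is a coefficient function on index sets A \<subseteq> {..<n}
 (A stands for the basis element e^{a_1...a_k}, a_1<...<a_k; {} stands for e).\<close>

type_synonym cl = "nat set \<Rightarrow> complex"

definition eta :: "nat \<Rightarrow> nat \<Rightarrow> complex" where
  "eta p a = (if a < p then 1 else -1)"

definition metric :: "nat \<Rightarrow> nat \<Rightarrow> nat \<Rightarrow> complex" where
  "metric p a b = (if a = b then eta p a else 0)"

definition cl_valid :: "nat \<Rightarrow> nat \<Rightarrow> cl \<Rightarrow> bool" where
  "cl_valid p q U \<longleftrightarrow> (\<forall>A. \<not> A \<subseteq> {..<p+q} \<longrightarrow> U A = 0)"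

text \<open>e_A e_B = (-1)^{#inversions} (prod of eta over A \<inter> B) e_{A \<triangle> B}\<close>
definition cl_sign :: "nat \<Rightarrow> nat set \<Rightarrow> nat set \<Rightarrow> complex" where
  "cl_sign p A B = (-1) ^ card {(a, b). a \<in> A \<and> b \<in> B \<and> b < a} * (\<Prod>a\<in>A \<inter> B. eta p a)"

definition cl_mul :: "nat \<Rightarrow> nat \<Rightarrow> cl \<Rightarrow> cl \<Rightarrow> cl" where
  "cl_mul p q U V = (\<lambda>C. \<Sum>A\<in>Pow {..<p+q}. \<Sum>B\<in>Pow {..<p+q}.
      if (A - B) \<union> (B - A) = C then cl_sign p A B * U A * V B else 0)"

definition cl_one :: cl where
  "cl_one = (\<lambda>A. if A = {} then 1 else 0)"

definition cl_gen :: "nat \<Rightarrow> cl" where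
  "cl_gen a = (\<lambda>A. if A = {a} then 1 else 0)"

definition cl_zero :: cl where
  "cl_zero = (\<lambda>A. 0)"

definition cl_add :: "cl \<Rightarrow> cl \<Rightarrow> cl" where
  "cl_add U V = (\<lambda>A. U A + V A)"

definition cl_sub :: "cl \<Rightarrow> cl \<Rightarrow> cl" where
  "cl_sub U V = (\<lambda>A. U A - V A)"

definition cl_scale :: "complex \<Rightarrow> cl \<Rightarrow> cl" where
  "cl_scale c U = (\<lambda>A. c * U A)"

definition cl_comm :: "nat \<Rightarrow> nat \<Rightarrow> cl \<Rightarrow> cl \<Rightarrow> cl" where
  "cl_comm p q U V = cl_sub (cl_mul p q U V) (cl_mul p q V U)"

definition cl_tr :: "cl \<Rightarrow> complex" where
  "cl_tr U = U {}"

definition cl_prod_list :: "nat \<Rightarrow> nat \<Rightarrow> cl list \<Rightarrow> cl" where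
  "cl_prod_list p q Us = foldr (cl_mul p q) Us cl_one"

text \<open>Cl_S(p,q): zero projection onto the centre (Cl_0 for even n, Cl_0 + Cl_n for odd n)\<close>
definition cl_S :: "nat \<Rightarrow> nat \<Rightarrow> cl \<Rightarrow> bool" where
  "cl_S p q U \<longleftrightarrow> cl_valid p q U \<and> U {} = 0 \<and> (odd (p+q) \<longrightarrow> U {..<p+q} = 0)"

definition cl_invertible :: "nat \<Rightarrow> nat \<Rightarrow> cl \<Rightarrow> bool" where
  "cl_invertible p q U \<longleftrightarrow> (\<exists>T. cl_valid p q T \<and> cl_mul p q U T = cl_one \<and> cl_mul p q T U = cl_one)"

definition cl_inv :: "nat \<Rightarrow> nat \<Rightarrow> cl \<Rightarrow> cl" where
  "cl_inv p q U = (SOME T. cl_valid p q T \<and> cl_mul p q U T = cl_one \<and> cl_mul p q T U = cl_one)"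

text \<open>R^{p,q}: points are x :: nat \<Rightarrow> real with x i = 0 for i \<ge> n
 (coordinates x 0, ..., x (n-1)), carrying the product (= Euclidean) topology.\<close>
definition Rn :: "nat \<Rightarrow> (nat \<Rightarrow> real) set" where
  "Rn n = {x. \<forall>i\<ge>n. x i = 0}"

definition has_pd :: "((nat \<Rightarrow> real) \<Rightarrow> complex) \<Rightarrow> nat \<Rightarrow> (nat \<Rightarrow> real) \<Rightarrow> complex \<Rightarrow> bool" where
  "has_pd f mu x v \<longleftrightarrow> ((\<lambda>t::real. f (x(mu := x mu + t))) has_vector_derivative v) (at 0)"

definition pd :: "nat \<Rightarrow> ((nat \<Rightarrow> real) \<Rightarrow> complex) \<Rightarrow> (nat \<Rightarrow> real) \<Rightarrow> complex" where
  "pd mu f x = vector_derivative (\<lambda>t::real. f (x(mu := x mu + t))) (at 0)"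

fun Ck :: "nat \<Rightarrow> nat \<Rightarrow> ((nat \<Rightarrow> real) \<Rightarrow> complex) \<Rightarrow> bool" where
  "Ck n 0 f = continuous_on (Rn n) f"
| "Ck n (Suc k) f = (continuous_on (Rn n) f \<and>
      (\<forall>mu<n. \<forall>x\<in>Rn n. has_pd f mu x (pd mu f x)) \<and> (\<forall>mu<n. Ck n k (pd mu f)))"

definition cl_Ck :: "nat \<Rightarrow> nat \<Rightarrow> nat \<Rightarrow> ((nat \<Rightarrow> real) \<Rightarrow> cl) \<Rightarrow> bool" where
  "cl_Ck p q k F \<longleftrightarrow> (\<forall>A. Ck (p+q) k (\<lambda>x. F x A))"

definition cl_smooth :: "nat \<Rightarrow> nat \<Rightarrow> ((nat \<Rightarrow> real) \<Rightarrow> cl) \<Rightarrow> bool" where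
  "cl_smooth p q F \<longleftrightarrow> (\<forall>k. cl_Ck p q k F)"

definition cl_pd :: "nat \<Rightarrow> ((nat \<Rightarrow> real) \<Rightarrow> cl) \<Rightarrow> (nat \<Rightarrow> real) \<Rightarrow> cl" where
  "cl_pd mu F x = (\<lambda>A. pd mu (\<lambda>y. F y A) x)"

definition clifford_field_vector :: "nat \<Rightarrow> nat \<Rightarrow> (nat \<Rightarrow> (nat \<Rightarrow> real) \<Rightarrow> cl) \<Rightarrow> bool" where
  "clifford_field_vector p q h \<longleftrightarrow>
     (\<forall>x\<in>Rn (p+q).
        (\<forall>mu<p+q. cl_valid p q (h mu x)) \<and>
        (\<forall>mu<p+q. \<forall>nu<p+q.
           cl_add (cl_mul p q (h mu x) (h nu x)) (cl_mul p q (h nu x) (h mu x))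
             = cl_scale (2 * metric p mu nu) cl_one) \<and>
        cl_tr (cl_prod_list p q (map (\<lambda>mu. h mu x) [0..<p+q])) = 0)"

definition zero_curvature :: "nat \<Rightarrow> nat \<Rightarrow> (nat \<Rightarrow> (nat \<Rightarrow> real) \<Rightarrow> cl) \<Rightarrow> bool" where
  "zero_curvature p q C \<longleftrightarrow>
     (\<forall>x\<in>Rn (p+q). \<forall>mu<p+q. \<forall>nu<p+q.
        cl_sub (cl_sub (cl_pd mu (C nu) x) (cl_pd nu (C mu) x)) (cl_comm p q (C mu x) (C nu x)) = cl_zero)"

end

theory Submission
  imports Defs "HOL-Library.Function_Algebras"
begin


definition symd :: "'a set \<Rightarrow> 'a set \<Rightarrow> 'a set" where
  "symd A B = (A - B) \<union> (B - A)"

lemma eta_sq: "eta p a * eta p a = 1"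
  by (simp add: eta_def)

lemma prod_symd:
  assumes "finite X" "finite Y" "\<And>x. f x * f x = (1::complex)"
  shows "prod f (symd X Y) = prod f X * prod f Y"
proof -
  have X: "prod f X = prod f (X - Y) * prod f (X \<inter> Y)"
    using prod.Int_Diff[OF assms(1), of f Y] by (simp add: mult.commute)
  have Y: "prod f Y = prod f (Y - X) * prod f (X \<inter> Y)"
    using prod.Int_Diff[OF assms(2), of f X] by (simp add: mult.commute Int_commute)
  have S: "prod f (symd X Y) = prod f (X - Y) * prod f (Y - X)"
    unfolding symd_def using assms by (subst prod.union_disjoint) auto
  have sq: "prod f (X \<inter> Y) * prod f (X \<inter> Y) = 1"
    by (simp add: prod.distrib[symmetric] assms)
  have e: "(a*c)*(b*c) = (a*b)*(c*c)" for a b c :: complex by (simp only: ac_simps)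
  show ?thesis unfolding X Y S e sq by simp
qed

lemma card_symd_parity:
  assumes "finite X" "finite Y"
  shows "card X + card Y = card (symd X Y) + 2 * card (X \<inter> Y)"
proof -
  have "card (symd X Y) = card (X - Y) + card (Y - X)"
    unfolding symd_def using assms by (subst card_Un_disjoint) auto
  moreover have "card X = card (X - Y) + card (X \<inter> Y)"
    using assms card_Diff_subset_Int[of X Y] card_mono[of X "X \<inter> Y"] by auto
  moreover have "card Y = card (Y - X) + card (X \<inter> Y)"
    using assms card_Diff_subset_Int[of Y X] card_mono[of Y "X \<inter> Y"] by (auto simp: Int_commute)
  ultimately show ?thesis by simp
qed

lemma pow_symd:
  assumes "finite X" "finite Y"
  shows "(-1::complex) ^ card (symd X Y) = (-1) ^ card X * (-1) ^ card Y"
proof -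
  have "(-1::complex) ^ card X * (-1) ^ card Y = (-1) ^ (card X + card Y)"
    by (rule power_add[symmetric])
  also have "\<dots> = (-1) ^ (card (symd X Y) + 2 * card (X \<inter> Y))"
    using card_symd_parity[OF assms] by simp
  also have "\<dots> = (-1) ^ card (symd X Y)"
    by (simp only: power_add power_mult) simp
  finally show ?thesis by simp
qed

definition invs :: "nat set \<Rightarrow> nat set \<Rightarrow> (nat \<times> nat) set" where
  "invs A B = {(a, b). a \<in> A \<and> b \<in> B \<and> b < a}"

lemma finite_invs: "finite A \<Longrightarrow> finite B \<Longrightarrow> finite (invs A B)"
  unfolding invs_def by (rule finite_subset[of _ "A \<times> B"]) auto

lemma cl_sign_invs: "cl_sign p A B = (-1) ^ card (invs A B) * (\<Prod>a\<in>A \<inter> B. eta p a)"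
  unfolding cl_sign_def invs_def by simp

lemma sign_sq: "cl_sign p A B * cl_sign p A B = 1"
proof -
  have e1: "(\<Prod>a\<in>A \<inter> B. eta p a) * (\<Prod>a\<in>A \<inter> B. eta p a) = 1"
    by (simp add: prod.distrib[symmetric] eta_sq)
  have e2: "((-1::complex) ^ card (invs A B)) * (-1) ^ card (invs A B) = 1"
    by (simp flip: power_add)
  have e3: "(a*b)*(a*b) = (a*a)*(b*b)" for a b :: complex by (simp only: ac_simps)
  show ?thesis unfolding cl_sign_invs by (subst e3) (simp add: e1 e2)
qed

lemma sign_left:
  assumes "finite A" "finite B" "finite C"
  shows "cl_sign p (symd A B) C = cl_sign p A C * cl_sign p B C"
proof -
  have i: "invs (symd A B) C = symd (invs A C) (invs B C)"
    unfolding invs_def symd_def by auto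
  have e: "symd A B \<inter> C = symd (A \<inter> C) (B \<inter> C)"
    unfolding symd_def by auto
  have 1: "(-1::complex) ^ card (invs (symd A B) C) = (-1) ^ card (invs A C) * (-1) ^ card (invs B C)"
    unfolding i by (intro pow_symd finite_invs assms)
  have 2: "(\<Prod>a\<in>symd A B \<inter> C. eta p a) = (\<Prod>a\<in>A \<inter> C. eta p a) * (\<Prod>a\<in>B \<inter> C. eta p a)"
    unfolding e by (intro prod_symd finite_Int assms eta_sq disjI1)
  show ?thesis unfolding cl_sign_invs 1 2 by (simp only: ac_simps)
qed

lemma sign_right:
  assumes "finite A" "finite B" "finite C"
  shows "cl_sign p A (symd B C) = cl_sign p A B * cl_sign p A C"
proof -
  have i: "invs A (symd B C) = symd (invs A B) (invs A C)"
    unfolding invs_def symd_def by auto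
  have e: "A \<inter> symd B C = symd (A \<inter> B) (A \<inter> C)"
    unfolding symd_def by auto
  have 1: "(-1::complex) ^ card (invs A (symd B C)) = (-1) ^ card (invs A B) * (-1) ^ card (invs A C)"
    unfolding i by (intro pow_symd finite_invs assms)
  have 2: "(\<Prod>a\<in>A \<inter> symd B C. eta p a) = (\<Prod>a\<in>A \<inter> B. eta p a) * (\<Prod>a\<in>A \<inter> C. eta p a)"
    unfolding e by (intro prod_symd finite_Int assms eta_sq disjI1)
  show ?thesis unfolding cl_sign_invs 1 2 by (simp only: ac_simps)
qed


lemma symd_eq_iff: "symd A B = C \<longleftrightarrow> B = symd A C"
  unfolding symd_def by blast

lemma symd_sub: "A \<subseteq> N \<Longrightarrow> symd A C \<subseteq> N \<longleftrightarrow> C \<subseteq> N"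
  unfolding symd_def by blast

lemma symd_cancel[simp]: "symd A (symd A C) = C" "symd (symd A C) A = C"
  unfolding symd_def by blast+

lemma symd_empty_iff: "symd A C = {} \<longleftrightarrow> A = C"
  unfolding symd_def by blast

lemma finite_symd[simp]: "finite A \<Longrightarrow> finite B \<Longrightarrow> finite (symd A B)"
  unfolding symd_def by auto

lemma mul_alt: "cl_mul p q U V C = (if C \<subseteq> {..<p+q} then
   (\<Sum>A\<in>Pow {..<p+q}. cl_sign p A (symd A C) * U A * V (symd A C)) else 0)"
proof -
  have inner: "(\<Sum>B\<in>Pow {..<p+q}. if (A - B) \<union> (B - A) = C then cl_sign p A B * U A * V B else 0)
     = (if C \<subseteq> {..<p+q} then cl_sign p A (symd A C) * U A * V (symd A C) else 0)"
    if "A \<in> Pow {..<p+q}" for A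
  proof -
    have "(\<Sum>B\<in>Pow {..<p+q}. if (A - B) \<union> (B - A) = C then cl_sign p A B * U A * V B else 0)
      = (\<Sum>B\<in>Pow {..<p+q}. if B = symd A C then cl_sign p A B * U A * V B else 0)"
      by (rule sum.cong) (auto simp flip: symd_def simp: symd_eq_iff)
    also have "\<dots> = (if symd A C \<in> Pow {..<p+q} then cl_sign p A (symd A C) * U A * V (symd A C) else 0)"
      by (rule sum.delta) simp
    finally show ?thesis using symd_sub[of A "{..<p+q}" C] that by auto
  qed
  have "cl_mul p q U V C = (\<Sum>A\<in>Pow {..<p+q}. if C \<subseteq> {..<p+q} then cl_sign p A (symd A C) * U A * V (symd A C) else 0)"
    unfolding cl_mul_def by (rule sum.cong[OF refl inner])
  then show ?thesis by simp
qed

lemma valid_mul[simp]: "cl_valid p q (cl_mul p q U V)"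
  unfolding cl_valid_def by (simp add: mul_alt)

lemma mul_add_left: "cl_mul p q (U + V) W = cl_mul p q U W + cl_mul p q V W"
  by (simp add: fun_eq_iff mul_alt algebra_simps sum.distrib)

lemma mul_add_right: "cl_mul p q W (U + V) = cl_mul p q W U + cl_mul p q W V"
  by (simp add: fun_eq_iff mul_alt algebra_simps sum.distrib)

lemma mul_diff_left: "cl_mul p q (U - V) W = cl_mul p q U W - cl_mul p q V W"
  by (simp add: fun_eq_iff mul_alt algebra_simps sum_subtractf)

lemma mul_diff_right: "cl_mul p q W (U - V) = cl_mul p q W U - cl_mul p q W V"
  by (simp add: fun_eq_iff mul_alt algebra_simps sum_subtractf)

lemma mul_minus_left: "cl_mul p q (- U) W = - cl_mul p q U W"
  by (simp add: fun_eq_iff mul_alt sum_negf)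

lemma mul_minus_right: "cl_mul p q W (- U) = - cl_mul p q W U"
  by (simp add: fun_eq_iff mul_alt sum_negf)

lemma mul_zero_left[simp]: "cl_mul p q 0 W = 0"
  by (simp add: fun_eq_iff mul_alt)

lemma mul_zero_right[simp]: "cl_mul p q W 0 = 0"
  by (simp add: fun_eq_iff mul_alt)

lemma mul_scale_left: "cl_mul p q (cl_scale c U) W = cl_scale c (cl_mul p q U W)"
  by (simp add: fun_eq_iff mul_alt cl_scale_def sum_distrib_left algebra_simps)

lemma mul_scale_right: "cl_mul p q W (cl_scale c U) = cl_scale c (cl_mul p q W U)"
  by (simp add: fun_eq_iff mul_alt cl_scale_def sum_distrib_left algebra_simps)

lemma sign_empty_right[simp]: "cl_sign p A {} = 1"
  unfolding cl_sign_def by simp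
lemma sign_empty_left[simp]: "cl_sign p {} A = 1"
  unfolding cl_sign_def by simp

lemma symd_empty[simp]: "symd A {} = A" "symd {} A = A" "symd A A = {}"
  unfolding symd_def by auto

lemma mul_one_right:
  assumes "cl_valid p q U" shows "cl_mul p q U cl_one = U"
proof
  fix C
  show "cl_mul p q U cl_one C = U C"
  proof (cases "C \<subseteq> {..<p+q}")
    case True
    have "cl_mul p q U cl_one C = (\<Sum>A\<in>Pow {..<p+q}. cl_sign p A (symd A C) * U A * cl_one (symd A C))"
      using True by (simp add: mul_alt)
    also have "\<dots> = (\<Sum>A\<in>Pow {..<p+q}. if A = C then U C else 0)"
      by (rule sum.cong) (auto simp: cl_one_def symd_empty_iff)
    also have "\<dots> = U C" using True by simp
    finally show ?thesis .
  next
    case False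
    then show ?thesis using assms by (simp add: mul_alt cl_valid_def)
  qed
qed

lemma mul_one_left:
  assumes "cl_valid p q U" shows "cl_mul p q cl_one U = U"
proof
  fix C
  show "cl_mul p q cl_one U C = U C"
  proof (cases "C \<subseteq> {..<p+q}")
    case True
    have "cl_mul p q cl_one U C = (\<Sum>A\<in>Pow {..<p+q}. cl_sign p A (symd A C) * cl_one A * U (symd A C))"
      using True by (simp add: mul_alt)
    also have "\<dots> = (\<Sum>A\<in>Pow {..<p+q}. if A = {} then U C else 0)"
      by (rule sum.cong) (auto simp: cl_one_def)
    also have "\<dots> = U C" using True by simp
    finally show ?thesis .
  next
    case False
    then show ?thesis using assms by (simp add: mul_alt cl_valid_def)
  qed
qed

lemma finite_Pow_sub: "A \<in> Pow {..<(n::nat)} \<Longrightarrow> finite A"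
  by (auto intro: finite_subset)

lemma mul_assoc: "cl_mul p q (cl_mul p q U V) W = cl_mul p q U (cl_mul p q V W)"
proof
  fix D
  let ?N = "Pow {..<p+q}"
  let ?s = "cl_sign p"
  show "cl_mul p q (cl_mul p q U V) W D = cl_mul p q U (cl_mul p q V W) D"
  proof (cases "D \<subseteq> {..<p+q}")
    case False
    then show ?thesis by (simp add: mul_alt)
  next
    case True
    have L: "cl_mul p q (cl_mul p q U V) W D = (\<Sum>C\<in>?N. \<Sum>A\<in>?N.
        ?s C (symd C D) * ?s A (symd A C) * U A * V (symd A C) * W (symd C D))"
      using True by (simp add: mul_alt sum_distrib_left sum_distrib_right algebra_simps)
    have R: "cl_mul p q U (cl_mul p q V W) D = (\<Sum>A\<in>?N. \<Sum>B\<in>?N.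
        ?s A (symd A D) * ?s B (symd B (symd A D)) * U A * V B * W (symd B (symd A D)))"
    proof -
      have "symd A D \<subseteq> {..<p+q}" if "A \<in> ?N" for A using symd_sub[of A "{..<p+q}" D] that True by auto
      then show ?thesis using True by (simp add: mul_alt sum_distrib_left sum_distrib_right algebra_simps)
    qed
    have R2: "(\<Sum>C\<in>?N. ?s C (symd C D) * ?s A (symd A C) * U A * V (symd A C) * W (symd C D)) =
       (\<Sum>B\<in>?N. ?s A (symd A D) * ?s B (symd B (symd A D)) * U A * V B * W (symd B (symd A D)))"
      if A: "A \<in> ?N" for A
    proof (rule sum.reindex_bij_witness[of _ "\<lambda>B. symd A B" "\<lambda>C. symd A C"])
      fix C assume C: "C \<in> ?N"
      show "symd A (symd A C) = C" by simp
      show "symd A C \<in> ?N" using symd_sub[of A "{..<p+q}" C] A C by auto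
      have fin: "finite A" "finite C" "finite D" using A C True finite_Pow_sub
        by (auto intro: finite_subset)
      have st: "symd (symd A C) (symd A D) = symd C D" unfolding symd_def by blast
      have s1: "?s (symd A C) (symd C D) = ?s A (symd C D) * ?s C (symd C D)"
        by (rule sign_left) (use fin in \<open>auto simp: symd_def\<close>)
      have s2: "?s A (symd A D) = ?s A (symd A C) * ?s A (symd C D)"
      proof -
        have "symd A D = symd (symd A C) (symd C D)" unfolding symd_def by blast
        then show ?thesis by (simp add: sign_right fin)
      qed
      have sq: "?s A (symd C D) * ?s A (symd C D) = 1" by (rule sign_sq)
      show "?s A (symd A D) * ?s (symd A C) (symd (symd A C) (symd A D)) * U A * V (symd A C) * W (symd (symd A C) (symd A D))
          = ?s C (symd C D) * ?s A (symd A C) * U A * V (symd A C) * W (symd C D)"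
        unfolding st s1 s2
        by (simp add: algebra_simps) (metis (no_types, lifting) mult.assoc mult.commute mult_1_right sq)
    next
      fix B assume B: "B \<in> ?N"
      show "symd A (symd A B) = B" by simp
      show "symd A B \<in> ?N" using symd_sub[of A "{..<p+q}" B] A B by auto
    qed
    show ?thesis unfolding L R
      by (subst sum.swap) (rule sum.cong[OF refl R2])
  qed
qed


lemma valid_one[simp]: "cl_valid p q cl_one"
  unfolding cl_valid_def cl_one_def by auto

lemma scale_scale[simp]: "cl_scale c (cl_scale d X) = cl_scale (c*d) X"
  by (simp add: cl_scale_def fun_eq_iff)

lemma scale_one[simp]: "cl_scale 1 X = X"
  by (simp add: cl_scale_def fun_eq_iff)

lemma scale_minus1: "cl_scale (-1) X = - X"
  by (simp add: cl_scale_def fun_eq_iff)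

lemma valid_scale[simp]: "cl_valid p q X \<Longrightarrow> cl_valid p q (cl_scale c X)"
  by (simp add: cl_valid_def cl_scale_def)

lemma tr_scale[simp]: "cl_tr (cl_scale c X) = c * cl_tr X"
  by (simp add: cl_tr_def cl_scale_def)

lemma tr_minus[simp]: "cl_tr (- X) = - cl_tr X"
  by (simp add: cl_tr_def)

lemma tr_one[simp]: "cl_tr cl_one = 1"
  by (simp add: cl_tr_def cl_one_def)

lemma tr_mul: "cl_tr (cl_mul p q U V) = (\<Sum>A\<in>Pow {..<p+q}. cl_sign p A A * U A * V A)"
  by (simp add: cl_tr_def mul_alt)

lemma tr_comm: "cl_tr (cl_mul p q U V) = cl_tr (cl_mul p q V U)"
  unfolding tr_mul by (simp add: mult_ac)

lemma cpl_Nil[simp]: "cl_prod_list p q [] = cl_one"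
  by (simp add: cl_prod_list_def)
lemma cpl_Cons[simp]: "cl_prod_list p q (x # xs) = cl_mul p q x (cl_prod_list p q xs)"
  by (simp add: cl_prod_list_def)

lemma valid_cpl[simp]: "cl_valid p q (cl_prod_list p q xs)"
  by (cases xs) auto

lemma cpl_append[simp]: "cl_prod_list p q (xs @ ys) = cl_mul p q (cl_prod_list p q xs) (cl_prod_list p q ys)"
  by (induction xs) (auto simp: mul_one_left mul_assoc)

fun oset :: "nat list \<Rightarrow> nat set" where
  "oset [] = {}"
| "oset (a # w) = symd (oset w) {a}"

lemma oset_sub: "set w \<subseteq> N \<Longrightarrow> oset w \<subseteq> N"
  by (induction w) (auto simp: symd_def)

lemma oset_append: "oset (u @ v) = symd (oset u) (oset v)"
  by (induction u) (auto simp: symd_def)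

lemma oset_distinct: "distinct L \<Longrightarrow> oset L = set L"
  by (induction L) (auto simp: symd_def)

lemma oset_rev: "oset (rev L) = oset L"
  by (induction L) (auto simp: oset_append symd_def)

locale cfv =
  fixes p q :: nat and g :: "nat \<Rightarrow> cl"
  assumes g_valid: "\<And>a. a < p+q \<Longrightarrow> cl_valid p q (g a)"
  and g_rel: "\<And>a b. a < p+q \<Longrightarrow> b < p+q \<Longrightarrow>
     cl_mul p q (g a) (g b) + cl_mul p q (g b) (g a) = cl_scale (2 * metric p a b) cl_one"
  and g_tr: "cl_tr (cl_prod_list p q (map g [0..<p+q])) = 0"
begin

abbreviation "M \<equiv> cl_mul p q"
abbreviation "P w \<equiv> cl_prod_list p q (map g w)"

lemma P_Nil: "P [] = cl_one"
  by simp

lemma P_Cons: "P (a # w) = M (g a) (P w)"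
  by simp

lemma valid_P[simp]: "cl_valid p q (P w)"
  by (cases w) auto

lemma P_append: "P (u @ v) = M (P u) (P v)"
  by simp

lemma P_single: "a < p+q \<Longrightarrow> P [a] = g a"
  by (simp add: mul_one_right g_valid)

lemma g_sq: "a < p+q \<Longrightarrow> M (g a) (g a) = cl_scale (eta p a) cl_one"
proof -
  assume a: "a < p+q"
  have "\<And>C. M (g a) (g a) C + M (g a) (g a) C = 2 * eta p a * cl_one C"
    using fun_cong[OF g_rel[OF a a]] by (simp add: metric_def cl_scale_def)
  then show ?thesis by (simp add: fun_eq_iff cl_scale_def)
qed

lemma g_anti: "a < p+q \<Longrightarrow> b < p+q \<Longrightarrow> a \<noteq> b \<Longrightarrow> M (g a) (g b) = - M (g b) (g a)"
proof -
  assume a: "a < p+q" "b < p+q" "a \<noteq> b"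
  have "M (g a) (g b) + M (g b) (g a) = 0"
    using g_rel[OF a(1,2)] a(3) by (simp add: metric_def cl_scale_def fun_eq_iff)
  then show ?thesis by (simp add: eq_neg_iff_add_eq_0)
qed

lemma eta_nz: "eta p a \<noteq> 0"
  by (simp add: eta_def)

lemma nf1:
  "sorted_wrt (<) L \<Longrightarrow> set L \<subseteq> {..<p+q} \<Longrightarrow> a < p+q \<Longrightarrow>
   \<exists>c L'. c \<noteq> 0 \<and> sorted_wrt (<) L' \<and> set L' = symd (set L) {a} \<and> M (g a) (P L) = cl_scale c (P L')"
proof (induction L)
  case Nil
  then show ?case
    by (intro exI[of _ 1] exI[of _ "[a]"]) (simp add: symd_def)
next
  case (Cons b L)
  have b: "b < p+q" and Ls: "set L \<subseteq> {..<p+q}" using Cons.prems by auto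
  have bl: "\<forall>x\<in>set L. b < x" and sL: "sorted_wrt (<) L" using Cons.prems by auto
  consider "a < b" | "a = b" | "b < a" by linarith
  then show ?case
  proof cases
    case 1
    then show ?thesis using Cons.prems bl
      by (intro exI[of _ 1] exI[of _ "a # b # L"]) (auto simp: symd_def)
  next
    case 2
    have "M (g a) (P (b # L)) = cl_scale (eta p a) (P L)"
      using 2 b by (simp add: mul_assoc[symmetric] g_sq mul_scale_left mul_one_left)
    moreover have "set L = symd (set (b # L)) {a}" using 2 bl by (auto simp: symd_def)
    ultimately show ?thesis using sL eta_nz
      by (intro exI[of _ "eta p a"] exI[of _ L]) auto
  next
    case 3
    obtain c L'' where c: "c \<noteq> 0" "sorted_wrt (<) L''" "set L'' = symd (set L) {a}"
      "M (g a) (P L) = cl_scale c (P L'')"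
      using Cons.IH[OF sL Ls Cons.prems(3)] by blast
    have "M (g a) (P (b # L)) = M (M (g a) (g b)) (P L)" by (simp add: mul_assoc)
    also have "\<dots> = - M (g b) (M (g a) (P L))"
      using g_anti[of a b] 3 b Cons.prems(3) by (simp add: mul_minus_left mul_assoc)
    also have "\<dots> = cl_scale (-c) (P (b # L''))"
      using c(4) by (simp add: mul_scale_right scale_minus1[symmetric])
    finally have e: "M (g a) (P (b # L)) = cl_scale (-c) (P (b # L''))" .
    have s: "sorted_wrt (<) (b # L'')" using c(2,3) bl 3 by (auto simp: symd_def)
    have st: "set (b # L'') = symd (set (b # L)) {a}" using c(3) 3 by (auto simp: symd_def)
    show ?thesis using e s st c(1) by (intro exI[of _ "-c"] exI[of _ "b # L''"]) auto
  qed
qed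

lemma nf:
  "set w \<subseteq> {..<p+q} \<Longrightarrow>
   \<exists>c L. c \<noteq> 0 \<and> sorted_wrt (<) L \<and> set L = oset w \<and> P w = cl_scale c (P L)"
proof (induction w)
  case Nil
  then show ?case by (intro exI[of _ 1] exI[of _ "[]"]) auto
next
  case (Cons a w)
  then obtain c L where c: "c \<noteq> 0" "sorted_wrt (<) L" "set L = oset w" "P w = cl_scale c (P L)"
    by auto
  have Ls: "set L \<subseteq> {..<p+q}" using c(3) oset_sub[of w] Cons.prems by auto
  obtain c' L' where c': "c' \<noteq> 0" "sorted_wrt (<) L'" "set L' = symd (set L) {a}"
    "M (g a) (P L) = cl_scale c' (P L')"
    using nf1[OF c(2) Ls, of a] Cons.prems by auto
  have "P (a # w) = cl_scale (c * c') (P L')"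
    using c(4) c'(4) by (simp add: mul_scale_right)
  then show ?case using c c' by (intro exI[of _ "c * c'"] exI[of _ L']) auto
qed

lemma P_comm:
  "distinct L \<Longrightarrow> set L \<subseteq> {..<p+q} \<Longrightarrow> d < p+q \<Longrightarrow>
   M (g d) (P L) = cl_scale ((-1) ^ length L * (if d \<in> set L then -1 else 1)) (M (P L) (g d))"
proof (induction L)
  case Nil
  then show ?case by (simp add: mul_one_right mul_one_left g_valid)
next
  case (Cons b L)
  have b: "b < p+q" "b \<notin> set L" "distinct L" "set L \<subseteq> {..<p+q}" using Cons.prems by auto
  note IH = Cons.IH[OF b(3,4) Cons.prems(3)]
  show ?case
  proof (cases "d = b")
    case True
    have "M (g d) (P (b # L)) = M (g b) (M (g b) (P L))" using True by simp
    also have "\<dots> = cl_scale ((-1) ^ length L) (M (g b) (M (P L) (g b)))"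
      using IH True b(2) by (simp add: mul_scale_right)
    also have "M (g b) (M (P L) (g b)) = M (P (b # L)) (g d)" using True by (simp add: mul_assoc)
    finally show ?thesis using True b(2) by simp
  next
    case False
    have "M (g d) (P (b # L)) = - M (g b) (M (g d) (P L))"
      using g_anti[of d b] False b Cons.prems(3) by (simp add: mul_assoc[symmetric] mul_minus_left)
    also have "\<dots> = cl_scale (- ((-1) ^ length L * (if d \<in> set L then -1 else 1))) (M (P (b # L)) (g d))"
      using IH by (simp add: mul_scale_right mul_assoc scale_minus1[symmetric])
    finally show ?thesis using False by simp
  qed
qed

lemma tr_P_zero:
  assumes L: "sorted_wrt (<) L" "set L \<subseteq> {..<p+q}" "L \<noteq> []"
  shows "cl_tr (P L) = 0"
proof -
  have dL: "distinct L" using L(1) strict_sorted_iff by blast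
  let ?X = "P L"
  have key: "cl_tr ?X = 0" if d: "d < p+q" and sg: "(-1::complex) ^ length L * (if d \<in> set L then -1 else 1) = -1" for d
  proof -
    have c: "M (g d) ?X = - M ?X (g d)"
      using P_comm[OF dL L(2) d] sg by (simp add: scale_minus1)
    have sq: "M (g d) (M (g d) ?X) = cl_scale (eta p d) ?X"
      using d by (simp add: mul_assoc[symmetric] g_sq mul_scale_left mul_one_left)
    have "cl_tr (M (g d) (M (g d) ?X)) = cl_tr (M (M (g d) ?X) (g d))" by (rule tr_comm)
    also have "\<dots> = cl_tr (M (g d) (M ?X (g d)))" by (simp add: mul_assoc)
    also have "\<dots> = - cl_tr (M (g d) (M (g d) ?X))"
      using c by (simp add: mul_minus_right)
    finally have "cl_tr (M (g d) (M (g d) ?X)) = 0" by simp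
    then show ?thesis using sq eta_nz by simp
  qed
  show ?thesis
  proof (cases "even (length L)")
    case True
    obtain d where "d \<in> set L" using L(3) by (cases L) auto
    then show ?thesis using key[of d] L(2) True by auto
  next
    case odd: False
    show ?thesis
    proof (cases "\<exists>d<p+q. d \<notin> set L")
      case True
      then obtain d where "d < p+q" "d \<notin> set L" by auto
      then show ?thesis using key[of d] odd by auto
    next
      case False
      then have "set L = set [0..<p+q]" using L(2) by auto
      then have "L = [0..<p+q]"
        using sorted_distinct_set_unique[of L "[0..<p+q]"] dL L(1) strict_sorted_iff by auto
      then show ?thesis using g_tr by simp
    qed
  qed
qed

lemma P_palin: "distinct L \<Longrightarrow> set L \<subseteq> {..<p+q} \<Longrightarrow> P (L @ rev L) = cl_scale (\<Prod>a\<in>set L. eta p a) cl_one"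
proof (induction L)
  case Nil
  then show ?case by simp
next
  case (Cons a L)
  then have a: "a < p+q" "a \<notin> set L" by auto
  have "P ((a # L) @ rev (a # L)) = M (g a) (M (P (L @ rev L)) (P [a]))"
    by (simp add: mul_assoc)
  also have "\<dots> = cl_scale ((\<Prod>a\<in>set L. eta p a) * eta p a) cl_one"
    using Cons a by (simp add: mul_one_right mul_scale_left mul_scale_right mul_one_left g_valid g_sq)
  finally show ?case using a by (simp add: mult.commute)
qed

definition LA :: "nat set \<Rightarrow> nat list" where "LA A = sorted_list_of_set A"
definition hA :: "nat set \<Rightarrow> cl" where "hA A = P (LA A)"
definition RA :: "nat set \<Rightarrow> cl" where "RA A = P (rev (LA A))"

lemma LA: "A \<subseteq> {..<p+q} \<Longrightarrow> sorted_wrt (<) (LA A) \<and> distinct (LA A) \<and> set (LA A) = A"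
proof -
  assume "A \<subseteq> {..<p+q}"
  then have "finite A" using finite_subset by blast
  then show ?thesis unfolding LA_def by auto
qed

lemma dual:
  assumes A: "A \<subseteq> {..<p+q}" and B: "B \<subseteq> {..<p+q}"
  shows "cl_tr (M (hA A) (RA B)) = (if A = B then (\<Prod>a\<in>B. eta p a) else 0)"
proof (cases "A = B")
  case True
  have "M (hA A) (RA B) = P (LA B @ rev (LA B))" unfolding hA_def RA_def True P_append ..
  also have "\<dots> = cl_scale (\<Prod>a\<in>B. eta p a) cl_one" using LA[OF B] B P_palin[of "LA B"] by auto
  finally show ?thesis using True by simp
next
  case False
  let ?w = "LA A @ rev (LA B)"
  have M: "M (hA A) (RA B) = P ?w" unfolding hA_def RA_def P_append ..
  have ws: "set ?w \<subseteq> {..<p+q}" using LA[OF A] LA[OF B] A B by auto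
  obtain c L where c: "c \<noteq> 0" "sorted_wrt (<) L" "set L = oset ?w" "P ?w = cl_scale c (P L)"
    using nf[OF ws] by blast
  have "oset ?w = symd A B"
    using LA[OF A] LA[OF B] by (simp add: oset_append oset_rev oset_distinct)
  moreover have "symd A B \<noteq> {}" using False by (simp add: symd_empty_iff)
  ultimately have "L \<noteq> []" using c(3) by auto
  moreover have "set L \<subseteq> {..<p+q}" using c(3) oset_sub[OF ws] by auto
  ultimately have "cl_tr (P L) = 0" using tr_P_zero c(2) by auto
  then show ?thesis using False M c(4) by simp
qed

lemma prod_eta_nz: "(\<Prod>a\<in>B. eta p a) \<noteq> 0"
  by (cases "finite B") (auto simp: eta_nz)

end


interpretation cv: vector_space cl_scale
  by unfold_locales (auto simp: cl_scale_def fun_eq_iff algebra_simps)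

lemma sum_fun_apply: "(\<Sum>w\<in>t. f w) C = (\<Sum>w\<in>t. (f w) C)" for f :: "'a \<Rightarrow> cl"
  by (induction t rule: infinite_finite_induct) auto

lemma cl_scale_plus: "cl_scale c (X + Y) = cl_scale c X + cl_scale c Y"
  by (simp add: cl_scale_def fun_eq_iff algebra_simps)

lemma card_invs_single:
  assumes "finite D"
  shows "card (invs D {a}) + card (invs {a} D) = card (D - {a})"
proof -
  have 1: "invs D {a} = (\<lambda>d. (d, a)) ` {d\<in>D. a < d}" unfolding invs_def by auto
  have 2: "invs {a} D = (\<lambda>d. (a, d)) ` {d\<in>D. d < a}" unfolding invs_def by auto
  have 3: "card (invs D {a}) = card {d\<in>D. a < d}" unfolding 1 by (rule card_image) (auto simp: inj_on_def)
  have 4: "card (invs {a} D) = card {d\<in>D. d < a}" unfolding 2 by (rule card_image) (auto simp: inj_on_def)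
  have 5: "D - {a} = {d\<in>D. a < d} \<union> {d\<in>D. d < a}" by auto
  have "card (D - {a}) = card {d\<in>D. a < d} + card {d\<in>D. d < a}"
    unfolding 5 by (rule card_Un_disjoint) (use assms in auto)
  then show ?thesis using 3 4 by simp
qed

lemma sign_single_prod:
  assumes "finite D"
  shows "cl_sign p D {a} * cl_sign p {a} D = (-1) ^ card (D - {a})"
proof -
  have e: "(\<Prod>x\<in>D \<inter> {a}. eta p x) * (\<Prod>x\<in>{a} \<inter> D. eta p x) = 1"
    by (simp add: Int_commute prod.distrib[symmetric] eta_sq)
  have "cl_sign p D {a} * cl_sign p {a} D =
     ((-1) ^ card (invs D {a}) * (-1) ^ card (invs {a} D)) *
     ((\<Prod>x\<in>D \<inter> {a}. eta p x) * (\<Prod>x\<in>{a} \<inter> D. eta p x))"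
    unfolding cl_sign_invs by (simp only: ac_simps)
  also have "\<dots> = (-1) ^ card (D - {a})"
    unfolding e by (simp add: card_invs_single[OF assms] flip: power_add)
  finally show ?thesis .
qed

lemma symd_eq_iff2: "symd A C = Y \<longleftrightarrow> A = symd Y C"
  unfolding symd_def by blast

lemma symd_more[simp]: "symd X (symd Y X) = Y" "symd (symd X Y) Y = X"
  unfolding symd_def by blast+

lemma gen_comm_coeff:
  assumes D: "D \<subseteq> {..<p+q}" and a: "a < p+q"
    and c: "cl_mul p q Z (cl_gen a) = cl_mul p q (cl_gen a) Z"
  shows "cl_sign p D {a} * Z D = cl_sign p {a} D * Z D"
proof -
  let ?C = "symd D {a}"
  have C: "?C \<subseteq> {..<p+q}" using symd_sub[OF D, of "{a}"] a by auto
  have "cl_mul p q Z (cl_gen a) ?C = (\<Sum>A\<in>Pow {..<p+q}. cl_sign p A (symd A ?C) * Z A * cl_gen a (symd A ?C))"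
    using C by (simp add: mul_alt)
  also have "\<dots> = (\<Sum>A\<in>Pow {..<p+q}. if A = D then cl_sign p D {a} * Z D else 0)"
    by (rule sum.cong[OF refl]) (simp add: cl_gen_def symd_eq_iff2)
  also have "\<dots> = cl_sign p D {a} * Z D" using D by simp
  finally have 1: "cl_mul p q Z (cl_gen a) ?C = cl_sign p D {a} * Z D" .
  have "cl_mul p q (cl_gen a) Z ?C = (\<Sum>A\<in>Pow {..<p+q}. cl_sign p A (symd A ?C) * cl_gen a A * Z (symd A ?C))"
    using C by (simp add: mul_alt)
  also have "\<dots> = (\<Sum>A\<in>Pow {..<p+q}. if A = {a} then cl_sign p {a} D * Z D else 0)"
    by (rule sum.cong[OF refl]) (simp add: cl_gen_def)
  also have "\<dots> = cl_sign p {a} D * Z D" using a by simp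
  finally have 2: "cl_mul p q (cl_gen a) Z ?C = cl_sign p {a} D * Z D" .
  have e: "cl_mul p q Z (cl_gen a) ?C = cl_mul p q (cl_gen a) Z ?C" using c by simp
  show ?thesis using e unfolding 1 2 .
qed

lemma central_coeff:
  assumes D: "D \<subseteq> {..<p+q}"
    and c: "\<And>a. a < p+q \<Longrightarrow> cl_mul p q Z (cl_gen a) = cl_mul p q (cl_gen a) Z"
    and nz: "Z D \<noteq> 0"
  shows "D = {} \<or> (D = {..<p+q} \<and> odd (p+q))"
proof -
  have fin: "finite D" using D finite_subset by blast
  have ev: "even (card (D - {a}))" if a: "a < p+q" for a
  proof -
    have "cl_sign p D {a} = cl_sign p {a} D" using gen_comm_coeff[OF D a c[OF a]] nz by simp
    then have "(-1::complex) ^ card (D - {a}) = 1" using sign_single_prod[OF fin, of p a] sign_sq[of p D "{a}"]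
      by simp
    then show ?thesis by (metis neg_one_odd_power one_neq_neg_one)
  qed
  show ?thesis
  proof (cases "D = {}")
    case False
    then obtain a where aD: "a \<in> D" by auto
    then have "a < p+q" using D by auto
    then have o: "odd (card D)" using ev[of a] aD fin False
    proof -
      have "card D = Suc (card (D - {a}))" using card_Suc_Diff1[OF fin aD] by simp
      then show ?thesis using ev[of a] \<open>a < p+q\<close> by simp
    qed
    have all: "D = {..<p+q}"
    proof (rule ccontr)
      assume "D \<noteq> {..<p+q}"
      then obtain b where "b < p+q" "b \<notin> D" using D by auto
      then show False using ev[of b] o by simp
    qed
    then show ?thesis using o by simp
  qed simp
qed

context cfv begin

definition phi :: "nat set \<Rightarrow> cl \<Rightarrow> complex" where "phi B Y = cl_tr (M Y (RA B))"

lemma phi_lin: "phi B (\<Sum>w\<in>t. cl_scale (u w) w) = (\<Sum>w\<in>t. u w * phi B w)"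
proof -
  have "phi B (\<Sum>w\<in>t. cl_scale (u w) w) = (\<Sum>A\<in>Pow {..<p+q}. \<Sum>w\<in>t. u w * (cl_sign p A A * w A * RA B A))"
    unfolding phi_def tr_mul sum_fun_apply
    by (simp add: cl_scale_def sum_distrib_left sum_distrib_right algebra_simps)
  also have "\<dots> = (\<Sum>w\<in>t. \<Sum>A\<in>Pow {..<p+q}. u w * (cl_sign p A A * w A * RA B A))"
    by (rule sum.swap)
  also have "\<dots> = (\<Sum>w\<in>t. u w * phi B w)"
    unfolding phi_def tr_mul by (simp add: sum_distrib_left)
  finally show ?thesis .
qed

lemma indep: "cv.independent (hA ` Pow {..<p+q})"
  unfolding cv.independent_explicit_module
proof (intro allI impI)
  fix t u v
  assume t: "finite t" "t \<subseteq> hA ` Pow {..<p+q}" "(\<Sum>v\<in>t. cl_scale (u v) v) = 0" "v \<in> t"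
  obtain B where B: "B \<subseteq> {..<p+q}" "v = hA B" using t by auto
  have z: "phi B w = 0" if w: "w \<in> t" "w \<noteq> v" for w
  proof -
    obtain A where A: "A \<subseteq> {..<p+q}" "w = hA A" using t w by auto
    then have "A \<noteq> B" using w B by auto
    then show ?thesis unfolding phi_def A(2) using dual[OF A(1) B(1)] by simp
  qed
  have "0 = phi B (\<Sum>v\<in>t. cl_scale (u v) v)" using t(3) by (simp add: phi_def cl_tr_def)
  also have "\<dots> = (\<Sum>w\<in>t. u w * phi B w)" by (rule phi_lin)
  also have "\<dots> = u v * phi B v"
    using z t(1,4) by (subst sum.remove[of t v]) auto
  also have "phi B v = (\<Prod>a\<in>B. eta p a)" unfolding phi_def B(2) using dual[OF B(1) B(1)] by simp
  finally show "u v = 0" using prod_eta_nz by simp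
qed

lemma hA_inj: "inj_on hA (Pow {..<p+q})"
proof (rule inj_onI)
  fix A B assume A: "A \<in> Pow {..<p+q}" and B: "B \<in> Pow {..<p+q}" and e: "hA A = hA B"
  have As: "A \<subseteq> {..<p+q}" and Bs: "B \<subseteq> {..<p+q}" using A B by auto
  have d1: "cl_tr (M (hA B) (RA B)) = (\<Prod>a\<in>B. eta p a)" using dual[OF Bs Bs] by simp
  have d2: "cl_tr (M (hA A) (RA B)) = (if A = B then (\<Prod>a\<in>B. eta p a) else 0)" by (rule dual[OF As Bs])
  show "A = B"
  proof (rule ccontr)
    assume "A \<noteq> B"
    then have "cl_tr (M (hA A) (RA B)) = 0" using d2 by simp
    then show False using d1 e prod_eta_nz[of B] by simp
  qed
qed

definition clb :: "nat set \<Rightarrow> cl" where "clb A = (\<lambda>C. if C = A then 1 else 0)"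

lemma valid_in_span: "cl_valid p q U \<Longrightarrow> U \<in> cv.span (clb ` Pow {..<p+q})"
proof -
  assume U: "cl_valid p q U"
  have "U = (\<Sum>A\<in>Pow {..<p+q}. cl_scale (U A) (clb A))"
  proof
    fix C
    have "(\<Sum>A\<in>Pow {..<p+q}. cl_scale (U A) (clb A)) C = (\<Sum>A\<in>Pow {..<p+q}. if C = A then U A else 0)"
      unfolding sum_fun_apply by (rule sum.cong[OF refl]) (simp add: cl_scale_def clb_def)
    moreover have "(\<Sum>A\<in>Pow {..<p+q}. if C = A then U A else 0) = (if C \<in> Pow {..<p+q} then U C else 0)"
      by (rule sum.delta') simp
    moreover have "U C = 0" if "\<not> C \<subseteq> {..<p+q}" using U that unfolding cl_valid_def by blast
    ultimately show "U C = (\<Sum>A\<in>Pow {..<p+q}. cl_scale (U A) (clb A)) C"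
      by (cases "C \<subseteq> {..<p+q}") auto
  qed
  also have "\<dots> \<in> cv.span (clb ` Pow {..<p+q})"
    by (intro cv.span_sum cv.span_scale cv.span_base) auto
  finally show ?thesis .
qed

lemma valid_hA: "cl_valid p q (hA A)"
  unfolding hA_def by simp

lemma span_all: "cl_valid p q U \<Longrightarrow> U \<in> cv.span (hA ` Pow {..<p+q})"
proof (rule ccontr)
  assume U: "cl_valid p q U" and nU: "U \<notin> cv.span (hA ` Pow {..<p+q})"
  let ?H = "hA ` Pow {..<p+q}"
  let ?E = "clb ` Pow {..<p+q}"
  have i: "cv.independent (insert U ?H)" by (rule cv.independent_insertI[OF nU indep])
  have s: "insert U ?H \<subseteq> cv.span ?E"
  proof (rule subsetI)
    fix x assume "x \<in> insert U ?H"
    then have "cl_valid p q x" using U valid_hA by auto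
    then show "x \<in> cv.span ?E" by (rule valid_in_span)
  qed
  have fE: "finite ?E" by (intro finite_imageI finite_Pow_iff[THEN iffD2] finite_lessThan)
  have "card (insert U ?H) \<le> card ?E"
    using cv.independent_span_bound[OF fE i s] by (rule conjunct2)
  also have "\<dots> \<le> card (Pow {..<p+q})" by (rule card_image_le) (intro finite_Pow_iff[THEN iffD2] finite_lessThan)
  finally have le: "card (insert U ?H) \<le> card (Pow {..<(p+q)})" .
  have nH: "U \<notin> ?H"
  proof
    assume "U \<in> ?H"
    then have "U \<in> cv.span ?H" by (rule cv.span_base)
    then show False using nU by contradiction
  qed
  have fH: "finite ?H" by (intro finite_imageI finite_Pow_iff[THEN iffD2] finite_lessThan)
  have e1: "card (insert U ?H) = Suc (card ?H)" by (rule card_insert_disjoint[OF fH nH])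
  have e2: "card ?H = card (Pow {..<(p+q)})" by (rule card_image[OF hA_inj])
  show False using le e1 e2 by linarith
qed

lemma commutant_zero:
  assumes Zv: "cl_valid p q Z" and Z0: "Z {} = 0" and ZN: "odd (p+q) \<longrightarrow> Z {..<p+q} = 0"
    and c: "\<And>a. a < p+q \<Longrightarrow> M Z (g a) = M (g a) Z"
  shows "Z = 0"
proof -
  have cP: "M Z (P w) = M (P w) Z" if "set w \<subseteq> {..<p+q}" for w
    using that
  proof (induction w)
    case Nil
    then show ?case by (simp add: mul_one_left mul_one_right Zv)
  next
    case (Cons a w)
    then have "M Z (P (a # w)) = M (M (g a) Z) (P w)" using c by (simp add: mul_assoc[symmetric])
    also have "\<dots> = M (P (a # w)) Z" using Cons by (simp add: mul_assoc)
    finally show ?case .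
  qed
  have cS: "M Z U = M U Z" if "U \<in> cv.span (hA ` Pow {..<p+q})" for U
    using that
  proof (induction rule: cv.span_induct)
    case step
    fix x assume "x \<in> hA ` Pow {..<p+q}"
    then obtain A where "A \<subseteq> {..<p+q}" "x = hA A" by auto
    then show "M Z x = M x Z" unfolding hA_def using cP LA by auto
  next
    case base
    show ?case unfolding cv.subspace_def
      by (auto simp: mul_add_left mul_add_right mul_scale_left mul_scale_right)
  qed
  have cg: "M Z (cl_gen a) = M (cl_gen a) Z" if "a < p+q" for a
    using cS span_all that by (simp add: cl_valid_def cl_gen_def)
  show ?thesis
  proof
    fix D
    show "Z D = 0 D"
    proof (cases "D \<subseteq> {..<p+q}")
      case True
      show ?thesis using central_coeff[OF True cg] Z0 ZN by auto
    next
      case False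
      then show ?thesis using Zv by (simp add: cl_valid_def)
    qed
  qed
qed

end


lemma hvd_quot_iff:
  fixes f :: "real \<Rightarrow> 'a::real_normed_vector"
  shows "(f has_vector_derivative D) (at 0) \<longleftrightarrow> ((\<lambda>t. (f t - f 0) /\<^sub>R t) \<longlongrightarrow> D) (at 0)"
proof -
  have bl: "bounded_linear (\<lambda>h::real. h *\<^sub>R D)" by (rule bounded_linear_scaleR_left)
  have ev: "\<forall>\<^sub>F y in at (0::real). norm (f y - f 0 - (y - 0) *\<^sub>R D) / norm (y - 0) = norm ((f y - f 0) /\<^sub>R y - D)"
  proof (rule eventually_at_filter[THEN iffD2], rule always_eventually, intro allI impI)
    fix y :: real assume "y \<noteq> 0"
    then have "f y - f 0 - y *\<^sub>R D = y *\<^sub>R ((f y - f 0) /\<^sub>R y - D)"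
      by (simp add: scaleR_diff_right)
    then show "norm (f y - f 0 - (y - 0) *\<^sub>R D) / norm (y - 0) = norm ((f y - f 0) /\<^sub>R y - D)"
      using \<open>y \<noteq> 0\<close> by simp
  qed
  have "(f has_vector_derivative D) (at 0) \<longleftrightarrow> ((\<lambda>y. norm (f y - f 0 - (y - 0) *\<^sub>R D) / norm (y - 0)) \<longlongrightarrow> 0) (at 0)"
    unfolding has_vector_derivative_def has_derivative_iff_norm using bl by simp
  also have "\<dots> \<longleftrightarrow> ((\<lambda>y. norm ((f y - f 0) /\<^sub>R y - D)) \<longlongrightarrow> 0) (at 0)"
    by (rule tendsto_cong[OF ev])
  also have "\<dots> \<longleftrightarrow> ((\<lambda>t. (f t - f 0) /\<^sub>R t) \<longlongrightarrow> D) (at 0)"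
    by (simp add: tendsto_norm_zero_iff Lim_null[symmetric])
  finally show ?thesis .
qed

lemma pd_eq: "has_pd f mu x v \<Longrightarrow> pd mu f x = v"
  unfolding has_pd_def pd_def by (rule vector_derivative_at)

definition cl_hpd :: "((nat \<Rightarrow> real) \<Rightarrow> cl) \<Rightarrow> nat \<Rightarrow> (nat \<Rightarrow> real) \<Rightarrow> cl \<Rightarrow> bool" where
  "cl_hpd F mu x V \<longleftrightarrow> (\<forall>A. has_pd (\<lambda>y. F y A) mu x (V A))"

lemma cl_pd_eq: "cl_hpd F mu x V \<Longrightarrow> cl_pd mu F x = V"
  unfolding cl_hpd_def cl_pd_def by (auto intro!: ext pd_eq)

lemma hpd_add: "cl_hpd F mu x F' \<Longrightarrow> cl_hpd G mu x G' \<Longrightarrow> cl_hpd (\<lambda>y. F y + G y) mu x (F' + G')"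
  unfolding cl_hpd_def has_pd_def by (auto intro!: has_vector_derivative_add)

lemma hpd_diff: "cl_hpd F mu x F' \<Longrightarrow> cl_hpd G mu x G' \<Longrightarrow> cl_hpd (\<lambda>y. F y - G y) mu x (F' - G')"
  unfolding cl_hpd_def has_pd_def by (auto intro!: has_vector_derivative_diff)

lemma hpd_minus: "cl_hpd F mu x F' \<Longrightarrow> cl_hpd (\<lambda>y. - F y) mu x (- F')"
  unfolding cl_hpd_def has_pd_def by (auto intro!: has_vector_derivative_minus)

lemma hpd_const: "cl_hpd (\<lambda>y. K) mu x 0"
  unfolding cl_hpd_def has_pd_def by auto

lemma hpd_mul:
  assumes F: "cl_hpd F mu x F'" and G: "cl_hpd G mu x G'"
  shows "cl_hpd (\<lambda>y. cl_mul p q (F y) (G y)) mu x (cl_mul p q F' (G x) + cl_mul p q (F x) G')"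
  unfolding cl_hpd_def has_pd_def
proof
  fix C
  let ?l = "\<lambda>t::real. x(mu := x mu + t)"
  have l0: "?l 0 = x" by simp
  show "((\<lambda>t. cl_mul p q (F (?l t)) (G (?l t)) C) has_vector_derivative
        (cl_mul p q F' (G x) + cl_mul p q (F x) G') C) (at 0)"
  proof (cases "C \<subseteq> {..<p+q}")
    case False
    then show ?thesis by (simp add: mul_alt)
  next
    case True
    have dF: "((\<lambda>t. F (?l t) A) has_vector_derivative F' A) (at 0)" for A
      using F unfolding cl_hpd_def has_pd_def by auto
    have dG: "((\<lambda>t. G (?l t) A) has_vector_derivative G' A) (at 0)" for A
      using G unfolding cl_hpd_def has_pd_def by auto
    have "((\<lambda>t. \<Sum>A\<in>Pow {..<p+q}. cl_sign p A (symd A C) * F (?l t) A * G (?l t) (symd A C)) has_vector_derivative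
       (\<Sum>A\<in>Pow {..<p+q}. cl_sign p A (symd A C) * F x A * G' (symd A C) + cl_sign p A (symd A C) * F' A * G x (symd A C))) (at 0)"
    proof (rule has_vector_derivative_sum)
      fix A
      have "((\<lambda>t. (cl_sign p A (symd A C) * F (?l t) A) * G (?l t) (symd A C)) has_vector_derivative
         (cl_sign p A (symd A C) * F (?l 0) A) * G' (symd A C) + (cl_sign p A (symd A C) * F' A) * G (?l 0) (symd A C)) (at 0)"
        by (intro has_vector_derivative_mult has_vector_derivative_mult_right dF dG)
      then show "((\<lambda>t. cl_sign p A (symd A C) * F (?l t) A * G (?l t) (symd A C)) has_vector_derivative
         cl_sign p A (symd A C) * F x A * G' (symd A C) + cl_sign p A (symd A C) * F' A * G x (symd A C)) (at 0)"
        by (simp only: l0)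
    qed
    then show ?thesis using True
      by (simp add: mul_alt sum.distrib algebra_simps)
  qed
qed

lemma hpd_scale: "cl_hpd F mu x F' \<Longrightarrow> cl_hpd (\<lambda>y. cl_scale c (F y)) mu x (cl_scale c F')"
  unfolding cl_hpd_def has_pd_def cl_scale_def by (auto intro!: has_vector_derivative_mult_right)

definition nrm :: "nat \<Rightarrow> nat \<Rightarrow> cl \<Rightarrow> real" where
  "nrm p q U = (\<Sum>A\<in>Pow {..<p+q}. cmod (U A))"

lemma nrm_ge0: "0 \<le> nrm p q U"
  unfolding nrm_def by (simp add: sum_nonneg)

lemma coeff_le_nrm: "C \<subseteq> {..<p+q} \<Longrightarrow> cmod (U C) \<le> nrm p q U"
  unfolding nrm_def by (rule member_le_sum) auto

lemma nrm_add: "nrm p q (U + V) \<le> nrm p q U + nrm p q V"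
  unfolding nrm_def by (simp add: sum.distrib[symmetric] sum_mono norm_triangle_ineq)

lemma nrm_minus: "nrm p q (- U) = nrm p q U"
  unfolding nrm_def by simp

lemma nrm_diff_sym: "nrm p q (U - V) = nrm p q (V - U)"
  unfolding nrm_def by (simp add: norm_minus_commute)

lemma cmod_eta[simp]: "cmod (eta p a) = 1"
  by (simp add: eta_def)

lemma cmod_sign: "cmod (cl_sign p A B) = 1"
  unfolding cl_sign_def by (simp add: norm_mult norm_power prod_norm[symmetric])

lemma nrm_mul: "nrm p q (cl_mul p q U V) \<le> nrm p q U * nrm p q V"
proof -
  let ?N = "Pow {..<p+q}"
  have "nrm p q (cl_mul p q U V) = (\<Sum>C\<in>?N. cmod (\<Sum>A\<in>?N. cl_sign p A (symd A C) * U A * V (symd A C)))"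
    unfolding nrm_def by (rule sum.cong) (auto simp: mul_alt)
  also have "\<dots> \<le> (\<Sum>C\<in>?N. \<Sum>A\<in>?N. cmod (U A) * cmod (V (symd A C)))"
  proof (rule sum_mono)
    fix C
    have "cmod (\<Sum>A\<in>?N. cl_sign p A (symd A C) * U A * V (symd A C)) \<le> (\<Sum>A\<in>?N. cmod (cl_sign p A (symd A C) * U A * V (symd A C)))"
      by (rule norm_sum)
    also have "\<dots> = (\<Sum>A\<in>?N. cmod (U A) * cmod (V (symd A C)))"
      by (simp add: norm_mult cmod_sign)
    finally show "cmod (\<Sum>A\<in>?N. cl_sign p A (symd A C) * U A * V (symd A C)) \<le> (\<Sum>A\<in>?N. cmod (U A) * cmod (V (symd A C)))" .
  qed
  also have "\<dots> = (\<Sum>A\<in>?N. \<Sum>C\<in>?N. cmod (U A) * cmod (V (symd A C)))"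
    by (rule sum.swap)
  also have "\<dots> = (\<Sum>A\<in>?N. cmod (U A) * nrm p q V)"
  proof (rule sum.cong[OF refl])
    fix A assume A: "A \<in> ?N"
    have "(\<Sum>C\<in>?N. cmod (V (symd A C))) = nrm p q V"
      unfolding nrm_def
    proof (rule sum.reindex_bij_witness[of _ "\<lambda>B. symd A B" "\<lambda>C. symd A C"])
      fix C assume "C \<in> ?N"
      then show "symd A (symd A C) = C" "symd A C \<in> ?N"
        using symd_sub[of A "{..<p+q}" C] A by auto
    next
      fix B assume "B \<in> ?N"
      then show "symd A (symd A B) = B" "symd A B \<in> ?N"
        using symd_sub[of A "{..<p+q}" B] A by auto
    qed simp
    then show "(\<Sum>C\<in>?N. cmod (U A) * cmod (V (symd A C))) = cmod (U A) * nrm p q V"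
      by (simp add: sum_distrib_left[symmetric])
  qed
  also have "\<dots> = nrm p q U * nrm p q V"
    unfolding nrm_def by (simp add: sum_distrib_right)
  finally show ?thesis .
qed

definition ctends :: "(real \<Rightarrow> cl) \<Rightarrow> cl \<Rightarrow> bool" where
  "ctends X X0 \<longleftrightarrow> (\<forall>C. ((\<lambda>t. X t C) \<longlongrightarrow> X0 C) (at 0))"

lemma ctends_mul:
  assumes "ctends X X0" "ctends Y Y0"
  shows "ctends (\<lambda>t. cl_mul p q (X t) (Y t)) (cl_mul p q X0 Y0)"
  unfolding ctends_def
proof
  fix C
  show "((\<lambda>t. cl_mul p q (X t) (Y t) C) \<longlongrightarrow> cl_mul p q X0 Y0 C) (at 0)"
  proof (cases "C \<subseteq> {..<p+q}")
    case True
    then show ?thesis using assms unfolding ctends_def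
      by (simp add: mul_alt) (intro tendsto_sum tendsto_mult tendsto_const; auto)
  qed (simp add: mul_alt)
qed

lemma ctends_nrm:
  assumes "ctends X X0"
  shows "((\<lambda>t. nrm p q (X t - X0)) \<longlongrightarrow> 0) (at 0)"
proof -
  have "((\<lambda>t. \<Sum>A\<in>Pow {..<p+q}. cmod (X t A - X0 A)) \<longlongrightarrow> (\<Sum>A\<in>Pow {..<p+q}. 0)) (at 0)"
  proof (intro tendsto_sum)
    fix A
    have "((\<lambda>t. X t A - X0 A) \<longlongrightarrow> 0) (at 0)"
      using assms unfolding ctends_def by (simp add: Lim_null[symmetric])
    then show "((\<lambda>t. cmod (X t A - X0 A)) \<longlongrightarrow> 0) (at 0)"
      by (simp add: tendsto_norm_zero_iff)
  qed
  then show ?thesis unfolding nrm_def by simp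
qed

lemma nrm_ctends:
  assumes "((\<lambda>t. nrm p q (X t - X0)) \<longlongrightarrow> 0) (at 0)"
    and "\<And>t. cl_valid p q (X t)" "cl_valid p q X0"
  shows "ctends X X0"
  unfolding ctends_def
proof
  fix C
  show "((\<lambda>t. X t C) \<longlongrightarrow> X0 C) (at 0)"
  proof (cases "C \<subseteq> {..<p+q}")
    case True
    have "((\<lambda>t. cmod (X t C - X0 C)) \<longlongrightarrow> 0) (at 0)"
    proof (rule tendsto_sandwich[OF _ _ tendsto_const assms(1)])
      show "\<forall>\<^sub>F t in at 0. 0 \<le> cmod (X t C - X0 C)" by simp
      show "\<forall>\<^sub>F t in at 0. cmod (X t C - X0 C) \<le> nrm p q (X t - X0)"
        using coeff_le_nrm[OF True, of "X _ - X0"] by simp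
    qed
    then show ?thesis by (simp add: tendsto_norm_zero_iff Lim_null[symmetric])
  next
    case False
    then show ?thesis using assms(2,3) by (simp add: cl_valid_def)
  qed
qed


lemma inv_deriv:
  fixes s a :: "real \<Rightarrow> cl" and S' :: cl
  assumes vs: "\<And>t. cl_valid p q (s t)" and va: "\<And>t. cl_valid p q (a t)"
    and inv1: "\<And>t. cl_mul p q (s t) (a t) = cl_one" and inv2: "\<And>t. cl_mul p q (a t) (s t) = cl_one"
    and ds: "\<And>C. ((\<lambda>t. s t C) has_vector_derivative S' C) (at 0)"
  shows "((\<lambda>t. a t C) has_vector_derivative (- cl_mul p q (a 0) (cl_mul p q S' (a 0))) C) (at 0)"
proof -
  let ?M = "cl_mul p q"
  let ?n = "nrm p q"
  have cs: "ctends s (s 0)"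
    unfolding ctends_def
  proof
    fix C
    have "continuous (at 0) (\<lambda>t. s t C)" by (rule has_vector_derivative_continuous[OF ds])
    then show "((\<lambda>t. s t C) \<longlongrightarrow> s 0 C) (at 0)" by (simp add: continuous_at)
  qed
  have I1: "a t - a 0 = ?M (a t) (?M (s 0 - s t) (a 0))" for t
  proof -
    have "?M (a t) (?M (s 0 - s t) (a 0)) = ?M (a t) (?M (s 0) (a 0)) - ?M (?M (a t) (s t)) (a 0)"
      by (simp add: mul_diff_left mul_diff_right mul_assoc)
    also have "\<dots> = a t - a 0" using inv1[of 0] inv2[of t] by (simp add: mul_one_right mul_one_left va)
    finally show ?thesis by simp
  qed
  have ns: "((\<lambda>t. ?n (s t - s 0)) \<longlongrightarrow> 0) (at 0)" by (rule ctends_nrm[OF cs])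
  define k where "k = ?n (a 0)"
  have k0: "0 \<le> k" unfolding k_def by (rule nrm_ge0)
  have "\<forall>\<^sub>F t in at 0. ?n (s t - s 0) < 1 / (2 * (k + 1))"
    using order_tendstoD(2)[OF ns, of "1 / (2 * (k + 1))"] k0 by simp
  then have ev1: "\<forall>\<^sub>F t in at 0. ?n (s t - s 0) * k \<le> 1/2"
  proof (rule eventually_mono)
    fix t assume h: "?n (s t - s 0) < 1 / (2 * (k + 1))"
    have n0: "0 \<le> ?n (s t - s 0)" by (rule nrm_ge0)
    have "?n (s t - s 0) * (2 * (k + 1)) < 1" using h k0 by (simp add: field_simps)
    then show "?n (s t - s 0) * k \<le> 1/2" using n0 k0 by (simp add: algebra_simps)
  qed
  have mb: "?n (?M (a t) (?M (s 0 - s t) (a 0))) \<le> ?n (a t) * (?n (s t - s 0) * k)" for t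
  proof -
    have "?n (?M (a t) (?M (s 0 - s t) (a 0))) \<le> ?n (a t) * ?n (?M (s 0 - s t) (a 0))" by (rule nrm_mul)
    also have "\<dots> \<le> ?n (a t) * (?n (s 0 - s t) * k)"
      unfolding k_def by (intro mult_left_mono nrm_mul nrm_ge0)
    finally show ?thesis by (simp add: nrm_diff_sym)
  qed
  have ev2: "\<forall>\<^sub>F t in at 0. ?n (a t) \<le> 2 * k"
    using ev1
  proof (rule eventually_mono)
    fix t assume h: "?n (s t - s 0) * k \<le> 1/2"
    have "a t = a 0 + ?M (a t) (?M (s 0 - s t) (a 0))" using I1[of t] by (simp add: algebra_simps)
    then have "?n (a t) \<le> k + ?n (?M (a t) (?M (s 0 - s t) (a 0)))"
      unfolding k_def by (metis nrm_add)
    also have "\<dots> \<le> k + ?n (a t) * (?n (s t - s 0) * k)" using mb[of t] by simp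
    also have "\<dots> \<le> k + ?n (a t) * (1/2)" using mult_left_mono[OF h nrm_ge0[of p q "a t"]] by simp
    finally show "?n (a t) \<le> 2 * k" by simp
  qed
  have ev3: "\<forall>\<^sub>F t in at 0. ?n (a t - a 0) \<le> (2 * k * k) * ?n (s t - s 0)"
    using ev2
  proof (rule eventually_mono)
    fix t assume h: "?n (a t) \<le> 2 * k"
    have "?n (a t - a 0) \<le> ?n (a t) * (?n (s t - s 0) * k)" using I1[of t] mb[of t] by simp
    also have "\<dots> \<le> (2 * k) * (?n (s t - s 0) * k)"
      using h by (intro mult_right_mono mult_nonneg_nonneg nrm_ge0 k0)
    finally show "?n (a t - a 0) \<le> (2 * k * k) * ?n (s t - s 0)" by (simp add: algebra_simps)
  qed
  have na: "((\<lambda>t. ?n (a t - a 0)) \<longlongrightarrow> 0) (at 0)"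
  proof (rule tendsto_sandwich[OF _ ev3 tendsto_const])
    show "\<forall>\<^sub>F t in at 0. 0 \<le> ?n (a t - a 0)" by (simp add: nrm_ge0)
    show "((\<lambda>t. 2 * k * k * ?n (s t - s 0)) \<longlongrightarrow> 0) (at 0)"
      using tendsto_mult_right_zero[OF ns, of "2 * k * k"] by simp
  qed
  have ca: "ctends a (a 0)" by (rule nrm_ctends[OF na va va])
  define Q where "Q t = cl_scale (complex_of_real (1 / t)) (s 0 - s t)" for t
  have cQ: "ctends Q (- S')"
    unfolding ctends_def
  proof
    fix C
    have "((\<lambda>t. (s t C - s 0 C) /\<^sub>R t) \<longlongrightarrow> S' C) (at 0)"
      using ds[of C] by (simp add: hvd_quot_iff)
    then have "((\<lambda>t. - ((s t C - s 0 C) /\<^sub>R t)) \<longlongrightarrow> - S' C) (at 0)" by (rule tendsto_minus)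
    moreover have "- ((s t C - s 0 C) /\<^sub>R t) = Q t C" for t
      unfolding Q_def cl_scale_def by (simp add: scaleR_conv_of_real algebra_simps divide_inverse)
    ultimately show "((\<lambda>t. Q t C) \<longlongrightarrow> (- S') C) (at 0)" by simp
  qed
  have c0: "ctends (\<lambda>t. a 0) (a 0)" unfolding ctends_def by simp
  have cP: "ctends (\<lambda>t. ?M (a t) (?M (Q t) (a 0))) (?M (a 0) (?M (- S') (a 0)))"
    by (intro ctends_mul ca cQ c0)
  have eq: "(a t C - a 0 C) /\<^sub>R t = ?M (a t) (?M (Q t) (a 0)) C" for t
  proof -
    have "?M (a t) (?M (Q t) (a 0)) = cl_scale (complex_of_real (1 / t)) (a t - a 0)"
      unfolding Q_def I1 by (simp add: mul_scale_left mul_scale_right)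
    then show ?thesis by (simp add: cl_scale_def scaleR_conv_of_real divide_inverse)
  qed
  have "((\<lambda>t. (a t C - a 0 C) /\<^sub>R t) \<longlongrightarrow> ?M (a 0) (?M (- S') (a 0)) C) (at 0)"
    using cP unfolding ctends_def eq by blast
  then show ?thesis unfolding hvd_quot_iff by (simp add: mul_minus_left mul_minus_right)
qed


lemma schwarz_real:
  fixes g g1 g2 g12 g21 :: "real \<Rightarrow> real \<Rightarrow> real"
  assumes d1: "\<And>s t. ((\<lambda>r. g (s + r) t) has_real_derivative g1 s t) (at 0)"
    and d2: "\<And>s t. ((\<lambda>r. g s (t + r)) has_real_derivative g2 s t) (at 0)"
    and d12: "\<And>s t. ((\<lambda>r. g1 s (t + r)) has_real_derivative g12 s t) (at 0)"
    and d21: "\<And>s t. ((\<lambda>r. g2 (s + r) t) has_real_derivative g21 s t) (at 0)"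
    and c12: "continuous (at (0,0)) (\<lambda>z. g12 (fst z) (snd z))"
    and c21: "continuous (at (0,0)) (\<lambda>z. g21 (fst z) (snd z))"
  shows "g12 0 0 = g21 0 0"
proof -
  have D1: "DERIV (\<lambda>u. g u t) s :> g1 s t" for s t
    using d1[of s t] DERIV_shift[of "\<lambda>u. g u t" "g1 s t" 0 s] by (simp add: add.commute)
  have D2: "DERIV (\<lambda>v. g s v) t :> g2 s t" for s t
    using d2[of s t] DERIV_shift[of "\<lambda>v. g s v" "g2 s t" 0 t] by (simp add: add.commute)
  have D12: "DERIV (\<lambda>v. g1 s v) t :> g12 s t" for s t
    using d12[of s t] DERIV_shift[of "\<lambda>v. g1 s v" "g12 s t" 0 t] by (simp add: add.commute)
  have D21: "DERIV (\<lambda>u. g2 u t) s :> g21 s t" for s t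
    using d21[of s t] DERIV_shift[of "\<lambda>u. g2 u t" "g21 s t" 0 s] by (simp add: add.commute)
  have key: "\<exists>a b c d. 0 < a \<and> a < h \<and> 0 < b \<and> b < h \<and> 0 < c \<and> c < h \<and> 0 < d \<and> d < h \<and> g12 a b = g21 c d"
    if h: "0 < h" for h
  proof -
    let ?D = "g h h - g h 0 - g 0 h + g 0 0"
    have Da: "DERIV (\<lambda>u. g u h - g u 0) u :> g1 u h - g1 u 0" for u by (intro DERIV_diff D1)
    obtain a where a: "0 < a" "a < h" "(g h h - g h 0) - (g 0 h - g 0 0) = (h - 0) * (g1 a h - g1 a 0)"
      using MVT2[OF h, of "\<lambda>u. g u h - g u 0" "\<lambda>u. g1 u h - g1 u 0"] Da by auto
    obtain b where b: "0 < b" "b < h" "g1 a h - g1 a 0 = (h - 0) * g12 a b"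
      using MVT2[OF h, of "\<lambda>v. g1 a v" "\<lambda>v. g12 a v"] D12 by auto
    have Dd: "DERIV (\<lambda>v. g h v - g 0 v) v :> g2 h v - g2 0 v" for v by (intro DERIV_diff D2)
    obtain d where d: "0 < d" "d < h" "(g h h - g 0 h) - (g h 0 - g 0 0) = (h - 0) * (g2 h d - g2 0 d)"
      using MVT2[OF h, of "\<lambda>v. g h v - g 0 v" "\<lambda>v. g2 h v - g2 0 v"] Dd by auto
    obtain c where c: "0 < c" "c < h" "g2 h d - g2 0 d = (h - 0) * g21 c d"
      using MVT2[OF h, of "\<lambda>u. g2 u d" "\<lambda>u. g21 u d"] D21 by auto
    have "h * (h * g12 a b) = h * (h * g21 c d)"
      using a(3) b(3) c(3) d(3) by (simp add: algebra_simps)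
    then have "g12 a b = g21 c d" using h by simp
    then show ?thesis using a b c d by blast
  qed
  show ?thesis
  proof (rule ccontr)
    assume ne: "g12 0 0 \<noteq> g21 0 0"
    define e where "e = \<bar>g12 0 0 - g21 0 0\<bar> / 2"
    have e: "0 < e" using ne unfolding e_def by simp
    obtain d1 where d1: "0 < d1" "\<And>z. dist z (0,0) < d1 \<Longrightarrow> dist (g12 (fst z) (snd z)) (g12 0 0) < e"
      using c12 e unfolding continuous_at_eps_delta by fastforce
    obtain d2 where d2: "0 < d2" "\<And>z. dist z (0,0) < d2 \<Longrightarrow> dist (g21 (fst z) (snd z)) (g21 0 0) < e"
      using c21 e unfolding continuous_at_eps_delta by fastforce
    define h where "h = min d1 d2 / 2"
    have h: "0 < h" using d1 d2 unfolding h_def by simp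
    obtain a b c d where abcd: "0 < a" "a < h" "0 < b" "b < h" "0 < c" "c < h" "0 < d" "d < h" "g12 a b = g21 c d"
      using key[OF h] by blast
    have dist2: "dist (x, y) (0::real, 0::real) \<le> \<bar>x\<bar> + \<bar>y\<bar>" for x y :: real
      by (simp add: dist_Pair_Pair sqrt_sum_squares_le_sum_abs)
    have "dist (a, b) (0,0) < d1" using dist2[of a b] abcd unfolding h_def by linarith
    then have 1: "\<bar>g12 a b - g12 0 0\<bar> < e" using d1(2)[of "(a,b)"] by (simp add: dist_real_def)
    have "dist (c, d) (0,0) < d2" using dist2[of c d] abcd unfolding h_def by linarith
    then have 2: "\<bar>g21 c d - g21 0 0\<bar> < e" using d2(2)[of "(c,d)"] by (simp add: dist_real_def)
    have "g12 0 0 - g21 0 0 = (g21 c d - g21 0 0) - (g12 a b - g12 0 0)" using abcd(9) by simp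
    then have "\<bar>g12 0 0 - g21 0 0\<bar> \<le> \<bar>g21 c d - g21 0 0\<bar> + \<bar>g12 a b - g12 0 0\<bar>"
      by (metis abs_triangle_ineq4)
    moreover have "\<And>u v w :: real. u \<le> v + w \<Longrightarrow> w < u/2 \<Longrightarrow> v < u/2 \<Longrightarrow> False" by linarith
    ultimately show False using 1 2 unfolding e_def by blast
  qed
qed

lemma schwarz_complex:
  fixes g g1 g2 g12 g21 :: "real \<Rightarrow> real \<Rightarrow> complex"
  assumes d1: "\<And>s t. ((\<lambda>r. g (s + r) t) has_vector_derivative g1 s t) (at 0)"
    and d2: "\<And>s t. ((\<lambda>r. g s (t + r)) has_vector_derivative g2 s t) (at 0)"
    and d12: "\<And>s t. ((\<lambda>r. g1 s (t + r)) has_vector_derivative g12 s t) (at 0)"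
    and d21: "\<And>s t. ((\<lambda>r. g2 (s + r) t) has_vector_derivative g21 s t) (at 0)"
    and c12: "continuous (at (0,0)) (\<lambda>z. g12 (fst z) (snd z))"
    and c21: "continuous (at (0,0)) (\<lambda>z. g21 (fst z) (snd z))"
  shows "g12 0 0 = g21 0 0"
proof (rule complex_eqI)
  have R: "((\<lambda>r. F r) has_vector_derivative D) (at 0) \<Longrightarrow> ((\<lambda>r. Re (F r)) has_real_derivative Re D) (at 0)"
    for F :: "real \<Rightarrow> complex" and D
    unfolding has_real_derivative_iff_has_vector_derivative
    by (rule bounded_linear.has_vector_derivative[OF bounded_linear_Re])
  have I: "((\<lambda>r. F r) has_vector_derivative D) (at 0) \<Longrightarrow> ((\<lambda>r. Im (F r)) has_real_derivative Im D) (at 0)"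
    for F :: "real \<Rightarrow> complex" and D
    unfolding has_real_derivative_iff_has_vector_derivative
    by (rule bounded_linear.has_vector_derivative[OF bounded_linear_Im])
  show "Re (g12 0 0) = Re (g21 0 0)"
    by (rule schwarz_real[of "\<lambda>s t. Re (g s t)" "\<lambda>s t. Re (g1 s t)" "\<lambda>s t. Re (g2 s t)"])
       (auto intro: R d1 d2 d12 d21 continuous_Re c12 c21)
  show "Im (g12 0 0) = Im (g21 0 0)"
    by (rule schwarz_real[of "\<lambda>s t. Im (g s t)" "\<lambda>s t. Im (g1 s t)" "\<lambda>s t. Im (g2 s t)"])
       (auto intro: I d1 d2 d12 d21 continuous_Im c12 c21)
qed


lemma Rn_upd: "x \<in> Rn n \<Longrightarrow> mu < n \<Longrightarrow> x(mu := c) \<in> Rn n"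
  unfolding Rn_def by auto

lemma Ck2_D:
  assumes "Ck n 2 f"
  shows "continuous_on (Rn n) f"
    and "\<And>mu x. mu < n \<Longrightarrow> x \<in> Rn n \<Longrightarrow> has_pd f mu x (pd mu f x)"
    and "\<And>mu. mu < n \<Longrightarrow> continuous_on (Rn n) (pd mu f)"
    and "\<And>mu nu x. mu < n \<Longrightarrow> nu < n \<Longrightarrow> x \<in> Rn n \<Longrightarrow> has_pd (pd mu f) nu x (pd nu (pd mu f) x)"
    and "\<And>mu nu. mu < n \<Longrightarrow> nu < n \<Longrightarrow> continuous_on (Rn n) (pd nu (pd mu f))"
  using assms by (simp_all add: numeral_2_eq_2)

lemma pd_cong: "(\<And>y. y \<in> Rn n \<Longrightarrow> f y = g y) \<Longrightarrow> x \<in> Rn n \<Longrightarrow> mu < n \<Longrightarrow> pd mu f x = pd mu g x"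
proof -
  assume fg: "\<And>y. y \<in> Rn n \<Longrightarrow> f y = g y" and x: "x \<in> Rn n" and mu: "mu < n"
  have "(\<lambda>t. f (x(mu := x mu + t))) = (\<lambda>t. g (x(mu := x mu + t)))"
    using fg Rn_upd[OF x mu] by auto
  then show ?thesis unfolding pd_def by simp
qed

lemma has_pd_cong: "(\<And>y. y \<in> Rn n \<Longrightarrow> f y = g y) \<Longrightarrow> x \<in> Rn n \<Longrightarrow> mu < n \<Longrightarrow> has_pd g mu x v \<Longrightarrow> has_pd f mu x v"
proof -
  assume fg: "\<And>y. y \<in> Rn n \<Longrightarrow> f y = g y" and x: "x \<in> Rn n" and mu: "mu < n" and h: "has_pd g mu x v"
  have "(\<lambda>t. f (x(mu := x mu + t))) = (\<lambda>t. g (x(mu := x mu + t)))"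
    using fg Rn_upd[OF x mu] by auto
  then show ?thesis using h unfolding has_pd_def by simp
qed

lemma pd_zero: "(\<And>y. y \<in> Rn n \<Longrightarrow> f y = 0) \<Longrightarrow> x \<in> Rn n \<Longrightarrow> mu < n \<Longrightarrow> pd mu f x = 0"
proof -
  assume "\<And>y. y \<in> Rn n \<Longrightarrow> f y = 0" "x \<in> Rn n" "mu < n"
  then have "pd mu f x = pd mu (\<lambda>y. 0) x" by (rule pd_cong)
  also have "\<dots> = 0" by (rule pd_eq) (simp add: has_pd_def)
  finally show ?thesis .
qed

lemma schwarz_pd:
  assumes f: "Ck n 2 f" and x: "x \<in> Rn n" and mu: "mu < n" and nu: "nu < n"
  shows "pd mu (pd nu f) x = pd nu (pd mu f) x"
proof (cases "mu = nu")
  case True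
  then show ?thesis by simp
next
  case ne: False
  define pt where "pt s t = x(mu := x mu + s, nu := x nu + t)" for s t :: real
  have ptR: "pt s t \<in> Rn n" for s t unfolding pt_def by (intro Rn_upd x mu nu)
  have pt_mu: "(pt s t)(mu := pt s t mu + r) = pt (s + r) t" for s t r
    unfolding pt_def using ne by (auto simp: fun_eq_iff)
  have pt_nu: "(pt s t)(nu := pt s t nu + r) = pt s (t + r)" for s t r
    unfolding pt_def using ne by (auto simp: fun_eq_iff)
  have pt0: "pt 0 0 = x" unfolding pt_def by simp
  have cpt: "continuous_on UNIV (\<lambda>z::real \<times> real. pt (fst z) (snd z))"
  proof (rule continuous_on_coordinatewise_then_product)
    fix i
    show "continuous_on UNIV (\<lambda>z::real \<times> real. pt (fst z) (snd z) i)"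
      unfolding pt_def by (cases "i = nu"; cases "i = mu") (auto intro!: continuous_intros)
  qed
  have cc: "continuous (at (0,0)) (\<lambda>z. h (pt (fst z) (snd z)))" if h: "continuous_on (Rn n) h" for h
  proof -
    have "continuous_on UNIV (\<lambda>z. h (pt (fst z) (snd z)))"
      by (rule continuous_on_compose2[OF h cpt]) (auto intro: ptR)
    then show ?thesis by (simp add: continuous_on_eq_continuous_at)
  qed
  note D = Ck2_D[OF f]
  have "pd nu (pd mu f) (pt 0 0) = pd mu (pd nu f) (pt 0 0)"
  proof (rule schwarz_complex[of "\<lambda>s t. f (pt s t)" "\<lambda>s t. pd mu f (pt s t)" "\<lambda>s t. pd nu f (pt s t)"
        "\<lambda>s t. pd nu (pd mu f) (pt s t)" "\<lambda>s t. pd mu (pd nu f) (pt s t)"])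
    fix s t
    show "((\<lambda>r. f (pt (s + r) t)) has_vector_derivative pd mu f (pt s t)) (at 0)"
      using D(2)[OF mu ptR[of s t]] unfolding has_pd_def pt_mu .
    show "((\<lambda>r. f (pt s (t + r))) has_vector_derivative pd nu f (pt s t)) (at 0)"
      using D(2)[OF nu ptR[of s t]] unfolding has_pd_def pt_nu .
    show "((\<lambda>r. pd mu f (pt s (t + r))) has_vector_derivative pd nu (pd mu f) (pt s t)) (at 0)"
      using D(4)[OF mu nu ptR[of s t]] unfolding has_pd_def pt_nu .
    show "((\<lambda>r. pd nu f (pt (s + r) t)) has_vector_derivative pd mu (pd nu f) (pt s t)) (at 0)"
      using D(4)[OF nu mu ptR[of s t]] unfolding has_pd_def pt_mu .
  next
    show "continuous (at (0, 0)) (\<lambda>z. pd nu (pd mu f) (pt (fst z) (snd z)))"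
      by (rule cc[OF D(5)[OF mu nu]])
    show "continuous (at (0, 0)) (\<lambda>z. pd mu (pd nu f) (pt (fst z) (snd z)))"
      by (rule cc[OF D(5)[OF nu mu]])
  qed
  then show ?thesis unfolding pt0 by simp
qed

lemma cl_pd_coeff: "(\<lambda>y. cl_pd nu F y A) = pd nu (\<lambda>y. F y A)"
  unfolding cl_pd_def by auto

lemma cl_hpd_C2:
  assumes "cl_Ck p q 2 F" "x \<in> Rn (p+q)" "mu < p+q"
  shows "cl_hpd F mu x (cl_pd mu F x)"
  using assms Ck2_D(2) unfolding cl_Ck_def cl_hpd_def cl_pd_def by blast

lemma cl_hpd2_C2:
  assumes "cl_Ck p q 2 F" "x \<in> Rn (p+q)" "mu < p+q" "nu < p+q"
  shows "cl_hpd (cl_pd nu F) mu x (cl_pd mu (cl_pd nu F) x)"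
  unfolding cl_hpd_def
proof
  fix A
  have "has_pd (pd nu (\<lambda>y. F y A)) mu x (pd mu (pd nu (\<lambda>y. F y A)) x)"
    using assms Ck2_D(4) unfolding cl_Ck_def by blast
  then show "has_pd (\<lambda>y. cl_pd nu F y A) mu x (cl_pd mu (cl_pd nu F) x A)"
    unfolding cl_pd_coeff by (simp add: cl_pd_def cl_pd_coeff)
qed

lemma cl_schwarz:
  assumes "cl_Ck p q 2 F" "x \<in> Rn (p+q)" "mu < p+q" "nu < p+q"
  shows "cl_pd mu (cl_pd nu F) x = cl_pd nu (cl_pd mu F) x"
proof
  fix A
  have "pd mu (pd nu (\<lambda>y. F y A)) x = pd nu (pd mu (\<lambda>y. F y A)) x"
    using assms schwarz_pd unfolding cl_Ck_def by blast
  then show "cl_pd mu (cl_pd nu F) x A = cl_pd nu (cl_pd mu F) x A"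
    by (simp add: cl_pd_def cl_pd_coeff)
qed

lemma cl_pd_cong:
  "(\<And>y. y \<in> Rn (p+q) \<Longrightarrow> F y = G y) \<Longrightarrow> x \<in> Rn (p+q) \<Longrightarrow> mu < p+q \<Longrightarrow> cl_pd mu F x = cl_pd mu G x"
  unfolding cl_pd_def by (auto intro!: ext pd_cong)

lemma cl_hpd_cong:
  assumes "\<And>y. y \<in> Rn (p+q) \<Longrightarrow> F y = G y" "x \<in> Rn (p+q)" "mu < p+q" "cl_hpd G mu x V"
  shows "cl_hpd F mu x V"
  unfolding cl_hpd_def
proof
  fix A
  show "has_pd (\<lambda>y. F y A) mu x (V A)"
    by (rule has_pd_cong[where g="\<lambda>y. G y A"]) (use assms in \<open>auto simp: cl_hpd_def\<close>)
qed

lemma valid_pd: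
  "(\<And>y. y \<in> Rn (p+q) \<Longrightarrow> cl_valid p q (F y)) \<Longrightarrow> x \<in> Rn (p+q) \<Longrightarrow> mu < p+q \<Longrightarrow> cl_valid p q (cl_pd mu F x)"
  unfolding cl_valid_def cl_pd_def by (auto intro!: pd_zero)

lemma pd_coeff_zero:
  "(\<And>y. y \<in> Rn (p+q) \<Longrightarrow> F y A = 0) \<Longrightarrow> x \<in> Rn (p+q) \<Longrightarrow> mu < p+q \<Longrightarrow> cl_pd mu F x A = 0"
  unfolding cl_pd_def by (auto intro!: pd_zero)


lemma jac_alg:
  fixes p q :: nat and dCmn dCnm Cm Cn h :: cl
  defines "M \<equiv> cl_mul p q"
  defines "Km \<equiv> M Cm h - M h Cm" and "Kn \<equiv> M Cn h - M h Cn"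
  defines "Z \<equiv> dCmn - dCnm - (M Cm Cn - M Cn Cm)"
  shows "(M dCmn h + M Cn Km - (M Km Cn + M h dCmn)) - (M dCnm h + M Cm Kn - (M Kn Cm + M h dCnm))
         = M Z h - M h Z"
  unfolding M_def Km_def Kn_def Z_def
  by (simp add: mul_diff_left mul_diff_right mul_add_left mul_add_right mul_assoc fun_eq_iff algebra_simps)

lemma gauge_alg:
  fixes p q :: nat and A S Cm Cn dCmn dCnm dSm dSn ddS :: cl
  defines "M \<equiv> cl_mul p q"
  assumes vA: "cl_valid p q A" and vS: "cl_valid p q S" and vCm: "cl_valid p q Cm" and vCn: "cl_valid p q Cn"
    and vdSm: "cl_valid p q dSm" and vdSn: "cl_valid p q dSn"
    and SA: "M S A = cl_one" and AS: "M A S = cl_one"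
  shows "((M (M (- M A (M dSm A)) Cn + M A dCmn) S + M (M A Cn) dSm) - (M (- M A (M dSm A)) dSn + M A ddS))
       - ((M (M (- M A (M dSn A)) Cm + M A dCnm) S + M (M A Cm) dSn) - (M (- M A (M dSn A)) dSm + M A ddS))
       - (M (M (M A Cm) S - M A dSm) (M (M A Cn) S - M A dSn) - M (M (M A Cn) S - M A dSn) (M (M A Cm) S - M A dSm))
       = M A (M (dCmn - dCnm - (M Cm Cn - M Cn Cm)) S)"
proof -
  have SAY: "M S (M A Y) = Y" if "cl_valid p q Y" for Y
    using that SA unfolding M_def by (simp add: mul_assoc[symmetric] mul_one_left)
  show ?thesis
    using vA vS vCm vCn vdSm vdSn unfolding M_def
    by (simp add: mul_diff_left mul_diff_right mul_add_left mul_add_right mul_minus_left mul_minus_right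
        mul_assoc SAY[unfolded M_def] fun_eq_iff algebra_simps)
qed


lemma cl_sub_eq: "cl_sub U V = U - V" by (simp add: cl_sub_def fun_eq_iff)
lemma cl_add_eq: "cl_add U V = U + V" by (simp add: cl_add_def fun_eq_iff)
lemma cl_zero_eq: "cl_zero = 0" by (simp add: cl_zero_def fun_eq_iff)
lemma cl_comm_eq: "cl_comm p q U V = cl_mul p q U V - cl_mul p q V U" by (simp add: cl_comm_def cl_sub_eq)

lemma valid_diff[simp]: "cl_valid p q U \<Longrightarrow> cl_valid p q V \<Longrightarrow> cl_valid p q (U - V)"
  by (simp add: cl_valid_def)

lemma invs_disj_card:
  assumes "finite A" "finite B" "A \<inter> B = {}"
  shows "card (invs A B) + card (invs B A) = card A * card B"
proof -
  have u: "A \<times> B = invs A B \<union> prod.swap ` invs B A"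
    unfolding invs_def using assms(3) by (auto simp: image_iff)
  have d: "invs A B \<inter> prod.swap ` invs B A = {}" unfolding invs_def by auto
  have f1: "finite (invs A B)" by (rule finite_invs[OF assms(1,2)])
  have f2: "finite (prod.swap ` invs B A)" using finite_invs[OF assms(2,1)] by simp
  have "card (A \<times> B) = card (invs A B) + card (prod.swap ` invs B A)"
    unfolding u by (rule card_Un_disjoint[OF f1 f2 d])
  also have "card (prod.swap ` invs B A) = card (invs B A)"
    by (rule card_image, rule inj_onI) (metis swap_swap)
  finally show ?thesis by (simp add: card_cartesian_product)
qed

lemma sign_disj_sym:
  assumes "finite A" "finite B" "A \<inter> B = {}" "even (card A * card B)"
  shows "cl_sign p A B = cl_sign p B A"
proof -
  have e: "even (card (invs A B) + card (invs B A))" using invs_disj_card[OF assms(1-3)] assms(4) by simp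
  have "(-1::complex) ^ card (invs A B) = (-1) ^ card (invs B A)"
  proof (cases "even (card (invs A B))")
    case True
    then have "even (card (invs B A))" using e by simp
    then show ?thesis using True by simp
  next
    case False
    then have "odd (card (invs B A))" using e by simp
    then show ?thesis using False by simp
  qed
  moreover have "B \<inter> A = {}" using assms(3) by blast
  ultimately show ?thesis unfolding cl_sign_invs using assms(3) by simp
qed

lemma mul_top_comm:
  assumes odd: "odd (p+q)"
  shows "cl_mul p q U V {..<p+q} = cl_mul p q V U {..<p+q}"
proof -
  let ?N = "{..<p+q}"
  have L: "cl_mul p q U V ?N = (\<Sum>A\<in>Pow ?N. cl_sign p A (symd A ?N) * U A * V (symd A ?N))"
    by (simp add: mul_alt)
  have R: "cl_mul p q V U ?N = (\<Sum>B\<in>Pow ?N. cl_sign p B (symd B ?N) * V B * U (symd B ?N))"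
    by (simp add: mul_alt)
  have "(\<Sum>B\<in>Pow ?N. cl_sign p B (symd B ?N) * V B * U (symd B ?N)) =
        (\<Sum>A\<in>Pow ?N. cl_sign p A (symd A ?N) * U A * V (symd A ?N))"
  proof (rule sum.reindex_bij_witness[of _ "\<lambda>A. symd A ?N" "\<lambda>B. symd B ?N"])
    fix A assume A: "A \<in> Pow ?N"
    show "symd (symd A ?N) ?N = A" by simp
    show "symd A ?N \<in> Pow ?N" using A by (auto simp: symd_def)
    have fA: "finite A" using A finite_subset by auto
    have sA: "symd A ?N = ?N - A" using A by (auto simp: symd_def)
    have cd: "card (?N - A) = (p+q) - card A" using A by (simp add: card_Diff_subset fA)
    have le: "card A \<le> p+q" using A card_mono[of ?N A] by auto
    have ev: "even (card A * card (?N - A))"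
      unfolding cd using odd le by auto
    have "cl_sign p (symd A ?N) A = cl_sign p A (symd A ?N)"
      unfolding sA by (rule sign_disj_sym[symmetric]) (use fA ev in auto)
    then show "cl_sign p (symd A ?N) (symd (symd A ?N) ?N) * U (symd A ?N) * V (symd (symd A ?N) ?N)
         = cl_sign p A (symd A ?N) * V A * U (symd A ?N)" by simp
  next
    fix B assume B: "B \<in> Pow ?N"
    show "symd (symd B ?N) ?N = B" by simp
    show "symd B ?N \<in> Pow ?N" using B by (auto simp: symd_def)
  qed
  then show ?thesis using L R by simp
qed

lemma tr_comm_coeff: "cl_mul p q U V {} = cl_mul p q V U {}"
  using tr_comm[of p q U V] by (simp add: cl_tr_def)


lemma part1:
  fixes h C :: "nat \<Rightarrow> (nat \<Rightarrow> real) \<Rightarrow> cl"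
  assumes cfvh: "clifford_field_vector p q h"
    and hS: "\<forall>mu<p+q. \<forall>x\<in>Rn (p+q). cl_S p q (h mu x)"
    and CS: "\<forall>mu<p+q. \<forall>x\<in>Rn (p+q). cl_S p q (C mu x)"
    and hC2: "\<forall>mu<p+q. cl_Ck p q 2 (h mu)"
    and CC2: "\<forall>mu<p+q. cl_Ck p q 2 (C mu)"
    and eq: "\<forall>x\<in>Rn (p+q). \<forall>mu<p+q. \<forall>nu<p+q.
         cl_sub (cl_pd mu (h nu) x) (cl_comm p q (C mu x) (h nu x)) = cl_zero"
  shows "zero_curvature p q C"
  unfolding zero_curvature_def
proof (intro ballI allI impI)
  fix x mu nu
  assume x: "x \<in> Rn (p+q)" and mu: "mu < p+q" and nu: "nu < p+q"
  let ?M = "cl_mul p q"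
  have vh: "cl_valid p q (h a y)" if "a < p+q" "y \<in> Rn (p+q)" for a y
    using hS that by (simp add: cl_S_def)
  have vC: "cl_valid p q (C a y)" if "a < p+q" "y \<in> Rn (p+q)" for a y
    using CS that by (simp add: cl_S_def)
  have K: "cl_pd a (h rho) y = ?M (C a y) (h rho y) - ?M (h rho y) (C a y)"
    if "a < p+q" "rho < p+q" "y \<in> Rn (p+q)" for a rho y
    using eq that unfolding cl_sub_eq cl_zero_eq cl_comm_eq by auto
  have second: "cl_pd a (cl_pd b (h rho)) x =
      ?M (cl_pd a (C b) x) (h rho x) + ?M (C b x) (?M (C a x) (h rho x) - ?M (h rho x) (C a x))
      - (?M (?M (C a x) (h rho x) - ?M (h rho x) (C a x)) (C b x) + ?M (h rho x) (cl_pd a (C b) x))"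
    if a: "a < p+q" and b: "b < p+q" and rho: "rho < p+q" for a b rho
  proof -
    have "cl_pd a (cl_pd b (h rho)) x = cl_pd a (\<lambda>y. ?M (C b y) (h rho y) - ?M (h rho y) (C b y)) x"
      by (rule cl_pd_cong[OF _ x a]) (rule K[OF b rho])
    also have "\<dots> = ?M (cl_pd a (C b) x) (h rho x) + ?M (C b x) (cl_pd a (h rho) x)
        - (?M (cl_pd a (h rho) x) (C b x) + ?M (h rho x) (cl_pd a (C b) x))"
    proof (rule cl_pd_eq)
      have hC: "cl_hpd (C b) a x (cl_pd a (C b) x)" using CC2 b x a by (intro cl_hpd_C2) auto
      have hh: "cl_hpd (h rho) a x (cl_pd a (h rho) x)" using hC2 rho x a by (intro cl_hpd_C2) auto
      show "cl_hpd (\<lambda>y. ?M (C b y) (h rho y) - ?M (h rho y) (C b y)) a x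
         (?M (cl_pd a (C b) x) (h rho x) + ?M (C b x) (cl_pd a (h rho) x)
          - (?M (cl_pd a (h rho) x) (C b x) + ?M (h rho x) (cl_pd a (C b) x)))"
        by (intro hpd_diff hpd_mul hC hh)
    qed
    finally show ?thesis using K[OF a rho x] by simp
  qed
  define Z where "Z = cl_pd mu (C nu) x - cl_pd nu (C mu) x - (?M (C mu x) (C nu x) - ?M (C nu x) (C mu x))"
  have comm: "?M Z (h rho x) = ?M (h rho x) Z" if rho: "rho < p+q" for rho
  proof -
    have "?M Z (h rho x) - ?M (h rho x) Z = cl_pd mu (cl_pd nu (h rho)) x - cl_pd nu (cl_pd mu (h rho)) x"
      unfolding second[OF mu nu rho] second[OF nu mu rho] Z_def by (rule jac_alg[symmetric])
    also have "\<dots> = 0" using cl_schwarz[of p q "h rho" x mu nu] hC2 rho x mu nu by simp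
    finally show ?thesis by simp
  qed
  interpret G: cfv p q "\<lambda>a. h a x"
  proof
    show "\<And>a. a < p + q \<Longrightarrow> cl_valid p q (h a x)" using vh x by auto
    show "\<And>a b. a < p + q \<Longrightarrow> b < p + q \<Longrightarrow>
         cl_mul p q (h a x) (h b x) + cl_mul p q (h b x) (h a x) = cl_scale (2 * metric p a b) cl_one"
      using cfvh x unfolding clifford_field_vector_def cl_add_eq by auto
    show "cl_tr (cl_prod_list p q (map (\<lambda>a. h a x) [0..<p + q])) = 0"
      using cfvh x unfolding clifford_field_vector_def by auto
  qed
  have vZ: "cl_valid p q Z" unfolding Z_def
    using vC mu nu x by (intro valid_diff valid_mul valid_pd) auto
  have Z0: "Z {} = 0"
  proof -
    have "cl_pd mu (C nu) x {} = 0" "cl_pd nu (C mu) x {} = 0"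
      using CS mu nu x by (auto intro!: pd_coeff_zero simp: cl_S_def)
    then show ?thesis unfolding Z_def using tr_comm_coeff[of p q "C mu x" "C nu x"] by simp
  qed
  have ZN: "odd (p+q) \<longrightarrow> Z {..<p+q} = 0"
  proof
    assume o: "odd (p+q)"
    have "cl_pd mu (C nu) x {..<p+q} = 0" "cl_pd nu (C mu) x {..<p+q} = 0"
      using CS mu nu x o by (auto intro!: pd_coeff_zero simp: cl_S_def)
    then show "Z {..<p+q} = 0" unfolding Z_def using mul_top_comm[OF o, of "C mu x" "C nu x"] by simp
  qed
  have "Z = 0" by (rule G.commutant_zero[OF vZ Z0 ZN comm])
  then show "cl_sub (cl_sub (cl_pd mu (C nu) x) (cl_pd nu (C mu) x)) (cl_comm p q (C mu x) (C nu x)) = cl_zero"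
    unfolding cl_sub_eq cl_comm_eq cl_zero_eq Z_def .
qed


lemma inv_props:
  assumes "cl_invertible p q U"
  shows "cl_valid p q (cl_inv p q U) \<and> cl_mul p q U (cl_inv p q U) = cl_one \<and> cl_mul p q (cl_inv p q U) U = cl_one"
  using assms unfolding cl_invertible_def cl_inv_def by (rule someI_ex)

lemma part2:
  fixes C :: "nat \<Rightarrow> (nat \<Rightarrow> real) \<Rightarrow> cl" and S :: "(nat \<Rightarrow> real) \<Rightarrow> cl"
  assumes CS: "\<forall>mu<p+q. \<forall>x\<in>Rn (p+q). cl_S p q (C mu x)"
    and CC2: "\<forall>mu<p+q. cl_Ck p q 2 (C mu)"
    and zc: "zero_curvature p q C"
    and Ssm: "cl_smooth p q S"
    and Sinv: "\<forall>x\<in>Rn (p+q). cl_valid p q (S x) \<and> cl_invertible p q (S x)"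
  shows "zero_curvature p q (\<lambda>mu x.
             cl_sub (cl_mul p q (cl_mul p q (cl_inv p q (S x)) (C mu x)) (S x))
                    (cl_mul p q (cl_inv p q (S x)) (cl_pd mu S x)))"
proof -
  let ?M = "cl_mul p q"
  let ?A = "\<lambda>y. cl_inv p q (S y)"
  have S2: "cl_Ck p q 2 S" using Ssm unfolding cl_smooth_def by blast
  have vS: "cl_valid p q (S y)" if "y \<in> Rn (p+q)" for y using Sinv that by blast
  have IA: "cl_valid p q (?A y) \<and> ?M (S y) (?A y) = cl_one \<and> ?M (?A y) (S y) = cl_one"
    if "y \<in> Rn (p+q)" for y using Sinv that inv_props by blast
  have vC: "cl_valid p q (C a y)" if "a < p+q" "y \<in> Rn (p+q)" for a y
    using CS that by (simp add: cl_S_def)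
  have hA: "cl_hpd ?A mu x (- ?M (?A x) (?M (cl_pd mu S x) (?A x)))"
    if x: "x \<in> Rn (p+q)" and mu: "mu < p+q" for x mu
    unfolding cl_hpd_def has_pd_def
  proof
    fix D
    let ?s = "\<lambda>t::real. S (x(mu := x mu + t))"
    let ?a = "\<lambda>t::real. cl_inv p q (S (x(mu := x mu + t)))"
    have R: "x(mu := x mu + t) \<in> Rn (p+q)" for t by (rule Rn_upd[OF x mu])
    have ds: "((\<lambda>t. ?s t D') has_vector_derivative cl_pd mu S x D') (at 0)" for D'
      using cl_hpd_C2[OF S2 x mu] unfolding cl_hpd_def has_pd_def by blast
    have "((\<lambda>t. ?a t D) has_vector_derivative (- ?M (?a 0) (?M (cl_pd mu S x) (?a 0))) D) (at 0)"
      by (rule inv_deriv[of p q ?s ?a]) (use vS IA R ds in auto)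
    then show "((\<lambda>t. ?a t D) has_vector_derivative (- ?M (?A x) (?M (cl_pd mu S x) (?A x))) D) (at 0)"
      by simp
  qed
  have deriv: "cl_pd mu (\<lambda>y. ?M (?M (?A y) (C nu y)) (S y) - ?M (?A y) (cl_pd nu S y)) x =
     (?M (?M (- ?M (?A x) (?M (cl_pd mu S x) (?A x))) (C nu x) + ?M (?A x) (cl_pd mu (C nu) x)) (S x)
        + ?M (?M (?A x) (C nu x)) (cl_pd mu S x))
     - (?M (- ?M (?A x) (?M (cl_pd mu S x) (?A x))) (cl_pd nu S x) + ?M (?A x) (cl_pd mu (cl_pd nu S) x))"
    if x: "x \<in> Rn (p+q)" and mu: "mu < p+q" and nu: "nu < p+q" for x mu nu
  proof (rule cl_pd_eq)
    have hC: "cl_hpd (C nu) mu x (cl_pd mu (C nu) x)" using CC2 nu x mu by (intro cl_hpd_C2) auto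
    have hS: "cl_hpd S mu x (cl_pd mu S x)" by (rule cl_hpd_C2[OF S2 x mu])
    have hdS: "cl_hpd (cl_pd nu S) mu x (cl_pd mu (cl_pd nu S) x)" by (rule cl_hpd2_C2[OF S2 x mu nu])
    show "cl_hpd (\<lambda>y. ?M (?M (?A y) (C nu y)) (S y) - ?M (?A y) (cl_pd nu S y)) mu x
     ((?M (?M (- ?M (?A x) (?M (cl_pd mu S x) (?A x))) (C nu x) + ?M (?A x) (cl_pd mu (C nu) x)) (S x)
        + ?M (?M (?A x) (C nu x)) (cl_pd mu S x))
     - (?M (- ?M (?A x) (?M (cl_pd mu S x) (?A x))) (cl_pd nu S x) + ?M (?A x) (cl_pd mu (cl_pd nu S) x)))"
      by (intro hpd_diff hpd_mul hA[OF x mu] hC hS hdS)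
  qed
  show ?thesis
    unfolding zero_curvature_def
  proof (intro ballI allI impI)
    fix x mu nu
    assume x: "x \<in> Rn (p+q)" and mu: "mu < p+q" and nu: "nu < p+q"
    have F0: "cl_pd mu (C nu) x - cl_pd nu (C mu) x - (?M (C mu x) (C nu x) - ?M (C nu x) (C mu x)) = 0"
      using zc x mu nu unfolding zero_curvature_def cl_sub_eq cl_comm_eq cl_zero_eq by blast
    have sw: "cl_pd nu (cl_pd mu S) x = cl_pd mu (cl_pd nu S) x" by (rule cl_schwarz[OF S2 x nu mu])
    have vdS: "cl_valid p q (cl_pd a S x)" if "a < p+q" for a
      by (rule valid_pd[OF vS x that])
    have "cl_sub (cl_sub (cl_pd mu (\<lambda>y. cl_sub (?M (?M (?A y) (C nu y)) (S y)) (?M (?A y) (cl_pd nu S y))) x)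
                  (cl_pd nu (\<lambda>y. cl_sub (?M (?M (?A y) (C mu y)) (S y)) (?M (?A y) (cl_pd mu S y))) x))
          (cl_comm p q (cl_sub (?M (?M (?A x) (C mu x)) (S x)) (?M (?A x) (cl_pd mu S x)))
                       (cl_sub (?M (?M (?A x) (C nu x)) (S x)) (?M (?A x) (cl_pd nu S x))))
      = ?M (?A x) (?M (cl_pd mu (C nu) x - cl_pd nu (C mu) x - (?M (C mu x) (C nu x) - ?M (C nu x) (C mu x))) (S x))"
      unfolding cl_comm_eq cl_sub_eq unfolding deriv[OF x mu nu] deriv[OF x nu mu] sw
      by (rule gauge_alg) (use IA[OF x] vS[OF x] vC[OF mu x] vC[OF nu x] vdS[OF mu] vdS[OF nu] in auto)
    also have "\<dots> = cl_zero" unfolding F0 cl_zero_eq by simp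
    finally show "cl_sub (cl_sub (cl_pd mu (\<lambda>x. cl_sub (?M (?M (?A x) (C nu x)) (S x)) (?M (?A x) (cl_pd nu S x))) x)
                  (cl_pd nu (\<lambda>x. cl_sub (?M (?M (?A x) (C mu x)) (S x)) (?M (?A x) (cl_pd mu S x))) x))
          (cl_comm p q (cl_sub (?M (?M (?A x) (C mu x)) (S x)) (?M (?A x) (cl_pd mu S x)))
                       (cl_sub (?M (?M (?A x) (C nu x)) (S x)) (?M (?A x) (cl_pd nu S x)))) = cl_zero" .
  qed
qed


theorem theorem7:
  fixes p q :: nat
  shows
   "(\<forall>(h :: nat \<Rightarrow> (nat \<Rightarrow> real) \<Rightarrow> cl) (C :: nat \<Rightarrow> (nat \<Rightarrow> real) \<Rightarrow> cl).
      clifford_field_vector p q h \<and>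
      (\<forall>mu<p+q. \<forall>x\<in>Rn (p+q). cl_S p q (h mu x)) \<and>
      (\<forall>mu<p+q. \<forall>x\<in>Rn (p+q). cl_S p q (C mu x)) \<and>
      (\<forall>mu<p+q. cl_Ck p q 2 (h mu)) \<and>
      (\<forall>mu<p+q. cl_Ck p q 2 (C mu)) \<and>
      (\<forall>x\<in>Rn (p+q). \<forall>mu<p+q. \<forall>nu<p+q.
         cl_sub (cl_pd mu (h nu) x) (cl_comm p q (C mu x) (h nu x)) = cl_zero)
      \<longrightarrow> zero_curvature p q C)
  \<and>
   (\<forall>(C :: nat \<Rightarrow> (nat \<Rightarrow> real) \<Rightarrow> cl) (S :: (nat \<Rightarrow> real) \<Rightarrow> cl).
      (\<forall>mu<p+q. \<forall>x\<in>Rn (p+q). cl_S p q (C mu x)) \<and>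
      (\<forall>mu<p+q. cl_Ck p q 2 (C mu)) \<and>
      zero_curvature p q C \<and>
      cl_smooth p q S \<and>
      (\<forall>x\<in>Rn (p+q). cl_valid p q (S x) \<and> cl_invertible p q (S x)) \<and>
      (\<forall>mu<p+q. \<forall>x\<in>Rn (p+q). cl_S p q (cl_mul p q (cl_inv p q (S x)) (cl_pd mu S x)))
      \<longrightarrow> zero_curvature p q (\<lambda>mu x.
             cl_sub (cl_mul p q (cl_mul p q (cl_inv p q (S x)) (C mu x)) (S x))
                    (cl_mul p q (cl_inv p q (S x)) (cl_pd mu S x))))"
  proof (intro conjI allI impI)
  fix h C :: "nat \<Rightarrow> (nat \<Rightarrow> real) \<Rightarrow> cl"
  assume "clifford_field_vector p q h \<and>
      (\<forall>mu<p+q. \<forall>x\<in>Rn (p+q). cl_S p q (h mu x)) \<and>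
      (\<forall>mu<p+q. \<forall>x\<in>Rn (p+q). cl_S p q (C mu x)) \<and>
      (\<forall>mu<p+q. cl_Ck p q 2 (h mu)) \<and>
      (\<forall>mu<p+q. cl_Ck p q 2 (C mu)) \<and>
      (\<forall>x\<in>Rn (p+q). \<forall>mu<p+q. \<forall>nu<p+q.
         cl_sub (cl_pd mu (h nu) x) (cl_comm p q (C mu x) (h nu x)) = cl_zero)"
  then show "zero_curvature p q C" using part1[of p q h C] by blast
next
  fix C :: "nat \<Rightarrow> (nat \<Rightarrow> real) \<Rightarrow> cl" and S :: "(nat \<Rightarrow> real) \<Rightarrow> cl"
  assume a: "(\<forall>mu<p+q. \<forall>x\<in>Rn (p+q). cl_S p q (C mu x)) \<and>
      (\<forall>mu<p+q. cl_Ck p q 2 (C mu)) \<and>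
      zero_curvature p q C \<and>
      cl_smooth p q S \<and>
      (\<forall>x\<in>Rn (p+q). cl_valid p q (S x) \<and> cl_invertible p q (S x)) \<and>
      (\<forall>mu<p+q. \<forall>x\<in>Rn (p+q). cl_S p q (cl_mul p q (cl_inv p q (S x)) (cl_pd mu S x)))"
  show "zero_curvature p q (\<lambda>mu x.
             cl_sub (cl_mul p q (cl_mul p q (cl_inv p q (S x)) (C mu x)) (S x))
                    (cl_mul p q (cl_inv p q (S x)) (cl_pd mu S x)))"
    using a part2[of p q C S] by blast
qed

end
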